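(* Let $V\in L^\infty(\mathbb{R})$ be real-valued with $\operatorname{supp}V\subset(-b,b)$ for some $b>0$ and $\int_{\mathbb{R}}V\,dx=0$, and let $g\in W_{2,\mathrm{loc}}^2(\mathbb{R})$. For $\alpha>0$ set $V_\alpha(x)=\alpha V(\alpha x)$. Then $$\alpha\int_{\mathbb{R}}V_\alpha g\,dx=g'(0)\int_{\mathbb{R}}xV(x)\,dx+o(\alpha^{-1/2})\quad\text{as }\alpha\to\infty.$$ *)

theory Defs
  imports "HOL-Analysis.Analysis" "HOL-Library.Landau_Symbols"
begin

definition test_function :: "(real \<Rightarrow> real) \<Rightarrow> bool" where
  "test_function \<phi> \<longleftrightarrow>
     (\<forall>k. \<forall>x. (deriv ^^ k) \<phi> differentiable (at x)) \<and>
     (\<exists>R. \<forall>x. \<bar>x\<bar> > R \<longrightarrow> \<phi> x = 0)"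

definition L2_loc :: "(real \<Rightarrow> real) \<Rightarrow> bool" where
  "L2_loc f \<longleftrightarrow> f \<in> borel_measurable lborel \<and>
     (\<forall>a b. set_integrable lborel {a..b} (\<lambda>x. (f x)\<^sup>2))"

definition weak_deriv :: "(real \<Rightarrow> real) \<Rightarrow> (real \<Rightarrow> real) \<Rightarrow> bool" where
  "weak_deriv f h \<longleftrightarrow>
     (\<forall>a b. set_integrable lborel {a..b} f \<and> set_integrable lborel {a..b} h) \<and>
     (\<forall>\<phi>. test_function \<phi> \<longrightarrow>
        (\<integral>x. f x * deriv \<phi> x \<partial>lborel) = - (\<integral>x. h x * \<phi> x \<partial>lborel))"

definition W22_loc_with :: "(real \<Rightarrow> real) \<Rightarrow> (real \<Rightarrow> real) \<Rightarrow> (real \<Rightarrow> real) \<Rightarrow> bool" where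
  "W22_loc_with g g1 g2 \<longleftrightarrow> L2_loc g \<and> L2_loc g1 \<and> L2_loc g2 \<and>
     weak_deriv g g1 \<and> weak_deriv g1 g2"

definition ess_bounded :: "(real \<Rightarrow> real) \<Rightarrow> bool" where
  "ess_bounded V \<longleftrightarrow> V \<in> borel_measurable lborel \<and> (\<exists>C. AE x in lborel. \<bar>V x\<bar> \<le> C)"

end

theory Submission
  imports Defs "HOL-Computational_Algebra.Polynomial" "HOL-Real_Asymp.Real_Asymp"
begin

definition smooth :: "(real \<Rightarrow> real) \<Rightarrow> bool" where
  "smooth f \<longleftrightarrow> (\<forall>k x. (deriv ^^ k) f differentiable (at x))"

lemma smooth_family:
  assumes "D 0 = f" and "\<And>k x. (D k has_real_derivative D (Suc k) x) (at x)"
  shows "(deriv ^^ k) f = D k"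
proof (induction k)
  case 0 then show ?case using assms(1) by simp
next
  case (Suc k)
  show ?case using assms(2) by (auto simp: Suc fun_eq_iff intro!: DERIV_imp_deriv)
qed

lemma smooth_familyI:
  assumes "D 0 = f" and "\<And>k x. (D k has_real_derivative D (Suc k) x) (at x)"
  shows "smooth f"
  unfolding smooth_def smooth_family[OF assms] using assms(2) real_differentiable_def by blast

lemma smooth_DERIV:
  assumes "smooth f" shows "((deriv ^^ k) f has_real_derivative (deriv ^^ Suc k) f x) (at x)"
  using assms unfolding smooth_def by (simp add: DERIV_deriv_iff_real_differentiable)

lemma smooth_affine:
  assumes "smooth f" shows "smooth (\<lambda>x. f (p * x + q))"
proof (rule smooth_familyI[where D="\<lambda>k x. p ^ k * (deriv ^^ k) f (p * x + q)"])
  fix k x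
  have "((\<lambda>x. (deriv ^^ k) f (p * x + q)) has_real_derivative (deriv ^^ Suc k) f (p * x + q) * p) (at x)"
  proof -
    have "((\<lambda>x. p * x + q) has_real_derivative p) (at x)" by (auto intro!: derivative_eq_intros)
    from DERIV_chain2[OF smooth_DERIV[OF assms] this] show ?thesis by simp
  qed
  then show "((\<lambda>x. p ^ k * (deriv ^^ k) f (p * x + q)) has_real_derivative p ^ Suc k * (deriv ^^ Suc k) f (p * x + q)) (at x)"
    by (auto intro!: derivative_eq_intros simp: algebra_simps)
qed simp

lemma smooth_lincomb:
  assumes "smooth f" "smooth g" shows "smooth (\<lambda>x. a * f x + c * g x)"
proof (rule smooth_familyI[where D="\<lambda>k x. a * (deriv ^^ k) f x + c * (deriv ^^ k) g x"])
  fix k x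
  show "((\<lambda>x. a * (deriv ^^ k) f x + c * (deriv ^^ k) g x) has_real_derivative a * (deriv ^^ Suc k) f x + c * (deriv ^^ Suc k) g x) (at x)"
    by (auto intro!: derivative_eq_intros smooth_DERIV assms)
qed simp

lemma smooth_antideriv:
  assumes "smooth f" "\<And>x. (F has_real_derivative f x) (at x)" shows "smooth F"
proof (rule smooth_familyI[where D="\<lambda>k. case k of 0 \<Rightarrow> F | Suc j \<Rightarrow> (deriv ^^ j) f"])
  fix k x
  show "((case k of 0 \<Rightarrow> F | Suc j \<Rightarrow> (deriv ^^ j) f) has_real_derivative (case Suc k of 0 \<Rightarrow> F | Suc j \<Rightarrow> (deriv ^^ j) f) x) (at x)"
  proof (cases k)
    case (Suc j) show ?thesis using smooth_DERIV[OF assms(1), of j x] Suc by simp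
  qed (use assms in simp)
qed simp

lemma smooth_deriv:
  assumes "smooth F" "\<And>x. (F has_real_derivative f x) (at x)" shows "deriv F = f"
  using assms(2) by (auto simp: fun_eq_iff intro!: DERIV_imp_deriv)

lemma smooth_test_function:
  assumes "smooth f" "\<And>x. x \<notin> {A..B} \<Longrightarrow> f x = 0" shows "test_function f"
  unfolding test_function_def
proof
  show "\<forall>k x. (deriv ^^ k) f differentiable at x" using assms(1) smooth_def by blast
  show "\<exists>R. \<forall>x. R < \<bar>x\<bar> \<longrightarrow> f x = 0"
    by (rule exI[of _ "\<bar>A\<bar> + \<bar>B\<bar>"]) (auto intro!: assms(2))
qed

lemma test_function_smooth: "test_function f \<Longrightarrow> smooth f"
  unfolding test_function_def smooth_def by blast


lemma deriv_formula:
  fixes P Q :: "real \<Rightarrow> real"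
  assumes P: "(P has_real_derivative p') (at x)" and Q: "(Q has_real_derivative q') (at x)"
    and q: "Q x \<noteq> 0"
  shows "((\<lambda>x. P x / (Q x) ^ m * exp (-1 / Q x)) has_real_derivative
          ((p' * Q x - real m * P x * q') * Q x + P x * q') / (Q x) ^ (m + 2) * exp (-1 / Q x)) (at x)"
proof -
  have "((\<lambda>x. P x / (Q x) ^ m * exp (-1 / Q x)) has_real_derivative
     (p' * Q x ^ m - P x * (real m * Q x ^ (m - 1) * q')) / (Q x ^ m * Q x ^ m) * exp (-1 / Q x)
       + P x / Q x ^ m * (exp (-1 / Q x) * (q' / (Q x * Q x)))) (at x)"
    apply (rule derivative_eq_intros P Q refl | simp add: q)+
    by (simp add: algebra_simps)
  moreover have "(p' * Q x ^ m - P x * (real m * Q x ^ (m - 1) * q')) / (Q x ^ m * Q x ^ m) * exp (-1 / Q x)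
       + P x / Q x ^ m * (exp (-1 / Q x) * (q' / (Q x * Q x)))
     = ((p' * Q x - real m * P x * q') * Q x + P x * q') / (Q x) ^ (m + 2) * exp (-1 / Q x)"
  proof (cases m)
    case 0 then show ?thesis using q by (simp add: field_simps power2_eq_square)
  next
    case (Suc j) then show ?thesis using q by (simp add: field_simps power2_eq_square)
  qed
  ultimately show ?thesis by simp
qed


definition QQ :: "real poly" where "QQ = [:0, 1, -1:]"

lemma poly_QQ: "poly QQ x = x * (1 - x)"
  by (simp add: QQ_def algebra_simps)

fun PP :: "nat \<Rightarrow> real poly" where
  "PP 0 = 1"
| "PP (Suc k) = (pderiv (PP k) * QQ - smult (of_nat (2*k)) (PP k * pderiv QQ)) * QQ + PP k * pderiv QQ"

definition EE :: "nat \<Rightarrow> real \<Rightarrow> real" where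
  "EE k x = (if 0 < x \<and> x < 1 then poly (PP k) x / (poly QQ x) ^ (2*k) * exp (-1 / poly QQ x) else 0)"

lemma EE_inner:
  assumes "0 < x" "x < 1"
  shows "((\<lambda>x. poly (PP k) x / (poly QQ x) ^ (2*k) * exp (-1 / poly QQ x)) has_real_derivative
          poly (PP (Suc k)) x / (poly QQ x) ^ (2*Suc k) * exp (-1 / poly QQ x)) (at x)"
proof -
  have q: "poly QQ x \<noteq> 0" using assms by (simp add: poly_QQ)
  have "2 * Suc k = 2 * k + 2" by simp
  then show ?thesis
    using deriv_formula[OF poly_DERIV poly_DERIV q, of "PP k" "2*k"]
    by (simp add: algebra_simps)
qed

lemma lim_aux:
  fixes r c :: "real \<Rightarrow> real"
  assumes r: "filterlim r at_top F" and c: "(c \<longlongrightarrow> c0) F"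
  shows "((\<lambda>h. c h * ((r h) ^ N * exp (- r h))) \<longlongrightarrow> 0) F"
proof -
  have "((\<lambda>t::real. t ^ N / exp t) \<longlongrightarrow> 0) at_top" by (rule tendsto_power_div_exp_0)
  then have "((\<lambda>t::real. t ^ N * exp (- t)) \<longlongrightarrow> 0) at_top"
    by (simp add: exp_minus field_simps)
  from filterlim_compose[OF this r] have "((\<lambda>h. (r h) ^ N * exp (- r h)) \<longlongrightarrow> 0) F"
    by (simp add: o_def)
  from tendsto_mult[OF c this] show ?thesis by simp
qed

lemma EE_deriv: "(EE k has_real_derivative EE (Suc k) x) (at x)"
proof -
  consider "0 < x \<and> x < 1" | "x < 0" | "x > 1" | "x = 0" | "x = 1" by linarith
  then show ?thesis
  proof cases
    case 1
    have e: "EE (Suc k) x = poly (PP (Suc k)) x / (poly QQ x) ^ (2*Suc k) * exp (-1 / poly QQ x)"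
      using 1 unfolding EE_def by (simp only: if_True simp_thms)
    show ?thesis unfolding e
      apply (rule has_field_derivative_transform_within_open[OF EE_inner[of x k], where S="{0<..<1}"])
      using 1 by (auto simp: EE_def)
  next
    case 2
    have e: "EE (Suc k) x = 0" using 2 by (simp add: EE_def)
    show ?thesis unfolding e
      apply (rule has_field_derivative_transform_within_open[OF DERIV_const[of 0], where S="{..<0}"])
      using 2 by (auto simp: EE_def)
  next
    case 3
    have e: "EE (Suc k) x = 0" using 3 by (simp add: EE_def)
    show ?thesis unfolding e
      apply (rule has_field_derivative_transform_within_open[OF DERIV_const[of 0], where S="{1<..}"])
      using 3 by (auto simp: EE_def)
  next
    case 4
    have r: "filterlim (\<lambda>h::real. 1 / (h * (1 - h))) at_top (at_right 0)" by real_asymp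
    have c: "((\<lambda>h. poly (PP k) h * (1 - h)) \<longlongrightarrow> poly (PP k) 0 * (1 - 0)) (at_right 0)"
      by (intro tendsto_intros)
    have R: "((\<lambda>h. (EE k (0 + h) - EE k 0) / h) \<longlongrightarrow> 0) (at_right 0)"
    proof (rule Lim_transform_eventually[OF lim_aux[OF r c, of "2*k+1"]])
      have "eventually (\<lambda>h::real. h < 1) (at_right 0)" by real_asymp
      moreover have "eventually (\<lambda>h::real. h > 0) (at_right 0)" by real_asymp
      ultimately show "\<forall>\<^sub>F h in at_right 0. poly (PP k) h * (1 - h) * ((1 / (h * (1 - h))) ^ (2 * k + 1) * exp (- (1 / (h * (1 - h))))) =
        (EE k (0 + h) - EE k 0) / h"
        by eventually_elim (auto simp: EE_def poly_QQ field_simps)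
    qed
    have L: "((\<lambda>h. (EE k (0 + h) - EE k 0) / h) \<longlongrightarrow> 0) (at_left 0)"
    proof (rule Lim_transform_eventually[OF tendsto_const[of 0]])
      have "eventually (\<lambda>h::real. h < 0) (at_left 0)" by real_asymp
      then show "\<forall>\<^sub>F h in at_left 0. 0 = (EE k (0 + h) - EE k 0) / h"
        by eventually_elim (auto simp: EE_def)
    qed
    have "EE (Suc k) 0 = 0" by (simp add: EE_def)
    then show ?thesis using 4 filterlim_split_at[OF L R] by (simp add: DERIV_def)
  next
    case 5
    have r: "filterlim (\<lambda>h::real. 1 / ((1 + h) * (- h))) at_top (at_left 0)" by real_asymp
    have c: "((\<lambda>h. - poly (PP k) (1 + h) * (1 + h)) \<longlongrightarrow> - poly (PP k) (1 + 0) * (1 + 0)) (at_left 0)"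
      by (intro tendsto_intros)
    have L: "((\<lambda>h. (EE k (1 + h) - EE k 1) / h) \<longlongrightarrow> 0) (at_left 0)"
    proof (rule Lim_transform_eventually[OF lim_aux[OF r c, of "2*k+1"]])
      have "eventually (\<lambda>h::real. h > -1) (at_left 0)" by real_asymp
      moreover have "eventually (\<lambda>h::real. h < 0) (at_left 0)" by real_asymp
      ultimately show "\<forall>\<^sub>F h in at_left 0. - poly (PP k) (1 + h) * (1 + h) * ((1 / ((1 + h) * (- h))) ^ (2 * k + 1) * exp (- (1 / ((1 + h) * (- h))))) =
        (EE k (1 + h) - EE k 1) / h"
      proof eventually_elim
        case (elim h)
        define q where "q = (1 + h) * (- h)"
        have q0: "q > 0" using elim unfolding q_def by (intro mult_pos_pos) auto
        have pq: "poly QQ (1 + h) = q" by (simp add: poly_QQ q_def)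
        have ee: "EE k (1 + h) = poly (PP k) (1 + h) / q ^ (2*k) * exp (-1 / q)"
          using elim by (simp add: EE_def pq)
        have e1: "EE k 1 = 0" by (simp add: EE_def)
        have p: "(1 / q) ^ (2 * k + 1) = 1 / q ^ (2 * k) * (1 / q)" by (simp add: power_add power_one_over)
        have m: "(1 + h) * (1 / q) = - 1 / h" using elim q0 by (simp add: q_def divide_simps)
        have "- poly (PP k) (1 + h) * (1 + h) * ((1 / q) ^ (2 * k + 1) * exp (- (1 / q)))
            = - poly (PP k) (1 + h) * ((1 + h) * (1 / q)) * (1 / q ^ (2 * k) * exp (- (1 / q)))"
          unfolding p using q0 by (simp add: field_simps)
        also have "\<dots> = (EE k (1 + h) - EE k 1) / h" unfolding m ee e1 by simp
        finally show ?case unfolding q_def .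
      qed
    qed
    have R: "((\<lambda>h. (EE k (1 + h) - EE k 1) / h) \<longlongrightarrow> 0) (at_right 0)"
    proof (rule Lim_transform_eventually[OF tendsto_const[of 0]])
      have "eventually (\<lambda>h::real. h > 0) (at_right 0)" by real_asymp
      then show "\<forall>\<^sub>F h in at_right 0. 0 = (EE k (1 + h) - EE k 1) / h"
        by eventually_elim (auto simp: EE_def)
    qed
    have "EE (Suc k) 1 = 0" by (simp add: EE_def)
    then show ?thesis using 5 filterlim_split_at[OF L R] by (simp add: DERIV_def)
  qed
qed


lemma integral_zero_on: "(\<And>x. x \<in> S \<Longrightarrow> f x = 0) \<Longrightarrow> integral S f = (0::real)"
  by (metis (mono_tags, lifting) integral_0 integral_cong)

lemma antideriv_base:
  fixes f :: "real \<Rightarrow> real"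
  assumes cont: "continuous_on UNIV f" and z: "\<And>x. x \<le> A \<Longrightarrow> f x = 0" and L: "L \<le> A"
  shows "integral {A..x} f = integral {L..x} f"
proof (cases "x < A")
  case True
  have "integral {L..x} f = 0" by (rule integral_zero_on) (use True z in auto)
  moreover have "{A..x} = {}" using True by auto
  ultimately show ?thesis by simp
next
  case False
  have i: "f integrable_on {L..x}" by (rule integrable_continuous_real) (rule continuous_on_subset[OF cont], simp)
  have "integral {L..A} f + integral {A..x} f = integral {L..x} f"
    using Henstock_Kurzweil_Integration.integral_combine[where a=L and c=A and b=x and f=f] False L i by auto
  moreover have "integral {L..A} f = 0" by (rule integral_zero_on) (use z in auto)
  ultimately show ?thesis by simp
qed

lemma antideriv:
  fixes f :: "real \<Rightarrow> real"
  assumes cont: "continuous_on UNIV f" and z: "\<And>x. x \<le> A \<Longrightarrow> f x = 0"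
  shows "((\<lambda>x. integral {A..x} f) has_real_derivative f t) (at t)"
proof -
  define L where "L = min A t - 1"
  have eq: "(\<lambda>x. integral {A..x} f) = (\<lambda>x. integral {L..x} f)"
  proof
    fix x show "integral {A..x} f = integral {L..x} f"
      by (rule antideriv_base[where A=A, OF cont]) (auto simp: L_def z)
  qed
  have "((\<lambda>x. integral {L..x} f) has_real_derivative f t) (at t within {L..t+1})"
    by (rule integral_has_real_derivative) (auto simp: L_def intro: continuous_on_subset[OF cont])
  moreover have "at t within {L..t+1} = at t" by (rule at_within_Icc_at) (auto simp: L_def)
  ultimately show ?thesis unfolding eq by simp
qed

lemma cc_integrable:
  fixes f :: "real \<Rightarrow> real"
  assumes cont: "continuous_on UNIV f" and z: "\<And>x. x \<notin> {A..B} \<Longrightarrow> f x = 0"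
  shows "integrable lborel f" and "integral\<^sup>L lborel f = integral {A..B} f"
proof -
  have si: "set_integrable lborel {A..B} f"
    by (rule borel_integrable_atLeastAtMost') (rule continuous_on_subset[OF cont], simp)
  have eq: "(\<lambda>x. indicator {A..B} x *\<^sub>R f x) = f"
    using z by (auto simp: fun_eq_iff indicator_def)
  show "integrable lborel f" using si unfolding set_integrable_def eq .
  show "integral\<^sup>L lborel f = integral {A..B} f"
    using set_borel_integral_eq_integral(2)[OF si] unfolding set_lebesgue_integral_def eq .
qed

lemma test_from_deriv:
  fixes f :: "real \<Rightarrow> real"
  assumes sm: "smooth f" and z: "\<And>x. x \<notin> {A<..<B} \<Longrightarrow> f x = 0" and i: "integral {A..B} f = 0"
  shows "test_function (\<lambda>x. integral {A..x} f)" and "deriv (\<lambda>x. integral {A..x} f) = f"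
proof -
  have cont: "continuous_on UNIV f"
    using sm unfolding smooth_def
    by (metis continuous_at_imp_continuous_on differentiable_imp_continuous_within funpow_0)
  have d: "\<And>t. ((\<lambda>x. integral {A..x} f) has_real_derivative f t) (at t)"
    by (rule antideriv[OF cont]) (use z in auto)
  show "deriv (\<lambda>x. integral {A..x} f) = f" by (rule smooth_deriv[OF smooth_antideriv[OF sm d] d])
  show "test_function (\<lambda>x. integral {A..x} f)"
  proof (rule smooth_test_function[OF smooth_antideriv[OF sm d], of A B])
    fix x assume x: "x \<notin> {A..B}"
    show "integral {A..x} f = 0"
    proof (cases "x < A")
      case True then show ?thesis by simp
    next
      case False
      show ?thesis
      proof (cases "A \<le> B")
        case False
        then show ?thesis by (intro integral_zero_on) (use z in auto)
      next
        case True
      then have xB: "B < x" "A \<le> B" using x \<open>\<not> x < A\<close> by auto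
      have ii: "f integrable_on {A..x}" by (rule integrable_continuous_real) (rule continuous_on_subset[OF cont], simp)
      have "integral {A..B} f + integral {B..x} f = integral {A..x} f"
        using Henstock_Kurzweil_Integration.integral_combine[where a=A and c=B and b=x and f=f] xB ii by auto
      moreover have "integral {B..x} f = 0" by (rule integral_zero_on) (use z in auto)
      ultimately show ?thesis using i by simp
      qed
    qed
  qed
qed


lemma smooth_EE0: "smooth (EE 0)"
  by (rule smooth_familyI[where D=EE]) (auto intro: EE_deriv)

lemma smooth_cont: "smooth f \<Longrightarrow> continuous_on UNIV f"
  unfolding smooth_def
  by (metis continuous_at_imp_continuous_on differentiable_imp_continuous_within funpow_0)

lemma EE0_eq: "EE 0 x = (if 0 < x \<and> x < 1 then exp (-1 / (x * (1 - x))) else 0)"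
  by (simp add: EE_def poly_QQ)

lemma EE0_nonneg: "EE 0 x \<ge> 0" by (simp add: EE0_eq)

definition c0 :: real where "c0 = integral {0..1} (EE 0)"

lemma c0_pos: "c0 > 0"
proof -
  have "integral {0..1} (\<lambda>x. 0::real) < integral {0..1} (EE 0)"
    using integral_less_real[of 0 1 "\<lambda>x. 0" "EE 0"] continuous_on_subset[OF smooth_cont[OF smooth_EE0]]
    by (auto simp: EE0_eq)
  then show ?thesis by (simp add: c0_def)
qed

definition rho :: "real \<Rightarrow> real" where "rho x = EE 0 x / c0"

lemma smooth_rho: "smooth rho"
proof -
  have "smooth (\<lambda>x. (1/c0) * EE 0 x + 0 * EE 0 x)" by (rule smooth_lincomb[OF smooth_EE0 smooth_EE0])
  then show ?thesis by (simp add: rho_def[abs_def])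
qed

lemma rho_cont: "continuous_on UNIV rho" by (rule smooth_cont[OF smooth_rho])
lemma rho_nonneg: "rho x \<ge> 0" unfolding rho_def by (rule divide_nonneg_pos[OF EE0_nonneg c0_pos])
lemma rho_zero: "x \<notin> {0<..<1} \<Longrightarrow> rho x = 0" by (auto simp: rho_def EE0_eq)
lemma rho_int01: "integral {0..1} rho = 1"
  using c0_pos by (simp add: rho_def[abs_def] c0_def)

lemma rho_lborel: "integrable lborel rho" "integral\<^sup>L lborel rho = 1"
proof -
  have z: "\<And>x. x \<notin> {0..1} \<Longrightarrow> rho x = 0" by (rule rho_zero) auto
  show "integrable lborel rho" "integral\<^sup>L lborel rho = 1"
    using cc_integrable[OF rho_cont z] rho_int01 by auto
qed

definition RR :: "real \<Rightarrow> real" where "RR x = integral {0..x} rho"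

lemma RR_deriv: "(RR has_real_derivative rho t) (at t)"
  unfolding RR_def[abs_def] by (rule antideriv[OF rho_cont]) (auto intro: rho_zero)

lemma smooth_RR: "smooth RR" by (rule smooth_antideriv[OF smooth_rho RR_deriv])

lemma RR_cont: "continuous_on UNIV RR" by (rule smooth_cont[OF smooth_RR])

lemma RR_le0: "x \<le> 0 \<Longrightarrow> RR x = 0"
  unfolding RR_def by (rule integral_zero_on) (auto intro: rho_zero)

lemma RR_ge1: "x \<ge> 1 \<Longrightarrow> RR x = 1"
proof -
  assume x: "x \<ge> 1"
  have ii: "rho integrable_on {0..x}" by (rule integrable_continuous_real) (rule continuous_on_subset[OF rho_cont], simp)
  have "integral {0..1} rho + integral {1..x} rho = integral {0..x} rho"
    using Henstock_Kurzweil_Integration.integral_combine[where a=0 and c=1 and b=x and f=rho] x ii by auto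
  moreover have "integral {1..x} rho = 0" by (rule integral_zero_on) (auto intro: rho_zero)
  ultimately show ?thesis using rho_int01 by (simp add: RR_def)
qed

lemma RR_bounds: "0 \<le> RR x" "RR x \<le> 1"
proof -
  have ii: "\<And>a b. rho integrable_on {a..b}" by (rule integrable_continuous_real) (rule continuous_on_subset[OF rho_cont], simp)
  show "0 \<le> RR x" unfolding RR_def by (rule integral_nonneg[OF ii]) (rule rho_nonneg)
  show "RR x \<le> 1"
  proof (cases "x \<le> 1")
    case True
    have "integral {0..x} rho \<le> integral {0..1} rho"
      by (rule integral_subset_le) (use True ii rho_nonneg in auto)
    then show ?thesis using rho_int01 by (simp add: RR_def)
  next
    case False then show ?thesis using RR_ge1 by simp
  qed
qed


lemma cont_bounded_Icc:
  fixes f :: "real \<Rightarrow> real"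
  assumes "continuous_on UNIV f"
  obtains M where "M > 0" "\<And>x. x \<in> {a..b} \<Longrightarrow> \<bar>f x\<bar> \<le> M"
proof -
  have "compact (f ` {a..b})" by (rule compact_continuous_image) (auto intro: continuous_on_subset[OF assms])
  then obtain M where "M > 0" "\<And>y. y \<in> f ` {a..b} \<Longrightarrow> norm y \<le> M"
    using compact_imp_bounded bounded_pos by metis
  then show ?thesis using that by auto
qed

lemma moll_conv:
  fixes f :: "real \<Rightarrow> real"
  assumes cont: "continuous_on UNIV f"
  shows "(\<lambda>m. \<integral>x. f x * (real (Suc m) * rho (real (Suc m) * (x - a))) \<partial>lborel) \<longlonglongrightarrow> f a"
proof -
  define n where "n m = real (Suc m)" for m
  have npos: "n m > 0" for m by (simp add: n_def)
  have eq: "(\<integral>x. f x * (n m * rho (n m * (x - a))) \<partial>lborel) = (\<integral>y. f (a + y / n m) * rho y \<partial>lborel)" for m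
  proof -
    have "(\<integral>x. f x * (n m * rho (n m * (x - a))) \<partial>lborel)
        = \<bar>1 / n m\<bar> *\<^sub>R (\<integral>y. f (a + 1 / n m * y) * (n m * rho (n m * (a + 1 / n m * y - a))) \<partial>lborel)"
      by (rule lborel_integral_real_affine) (use npos[of m] in simp)
    also have "\<dots> = (1 / n m) * (\<integral>y. n m * (f (a + y / n m) * rho y) \<partial>lborel)"
    proof -
      have e2: "(\<lambda>y. f (a + 1 / n m * y) * (n m * rho (n m * (a + 1 / n m * y - a)))) = (\<lambda>y. n m * (f (a + y / n m) * rho y))"
        using npos[of m] by (simp add: fun_eq_iff)
      show ?thesis unfolding e2 integral_mult_right_zero using npos[of m] by simp
    qed
    also have "\<dots> = (\<integral>y. f (a + y / n m) * rho y \<partial>lborel)"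
      using npos[of m] by simp
    finally show ?thesis .
  qed
  obtain M where M: "M > 0" "\<And>x. x \<in> {a..a+1} \<Longrightarrow> \<bar>f x\<bar> \<le> M"
    using cont_bounded_Icc[OF cont] by metis
  have fm: "f \<in> borel_measurable borel" by (rule borel_measurable_continuous_onI[OF cont])
  have rm: "rho \<in> borel_measurable borel" by (rule borel_measurable_continuous_onI[OF rho_cont])
  have lim: "(\<lambda>m. \<integral>y. f (a + y / n m) * rho y \<partial>lborel) \<longlonglongrightarrow> (\<integral>y. f a * rho y \<partial>lborel)"
  proof (rule integral_dominated_convergence[where w="\<lambda>y. M * rho y"])
    show "(\<lambda>y. f a * rho y) \<in> borel_measurable lborel" using rm by simp
    show "\<And>m. (\<lambda>y. f (a + y / n m) * rho y) \<in> borel_measurable lborel" using rm fm by simp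
    show "integrable lborel (\<lambda>y. M * rho y)" using rho_lborel(1) by simp
    show "AE y in lborel. (\<lambda>m. f (a + y / n m) * rho y) \<longlonglongrightarrow> f a * rho y"
    proof (rule AE_I2)
      fix y
      have "(\<lambda>m. y / n m) \<longlonglongrightarrow> 0"
        using LIMSEQ_Suc[OF lim_const_over_n[of y]] by (simp add: n_def)
      then have "(\<lambda>m. a + y / n m) \<longlonglongrightarrow> a + 0" by (intro tendsto_intros)
      then have "(\<lambda>m. f (a + y / n m)) \<longlonglongrightarrow> f a"
        using cont by (simp add: continuous_on_tendsto_compose[OF cont])
      then show "(\<lambda>m. f (a + y / n m) * rho y) \<longlonglongrightarrow> f a * rho y" by (intro tendsto_intros)
    qed
    show "AE y in lborel. norm (f (a + y / n m) * rho y) \<le> M * rho y" for m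
    proof (rule AE_I2)
      fix y
      show "norm (f (a + y / n m) * rho y) \<le> M * rho y"
      proof (cases "y \<in> {0<..<1}")
        case True
        have "a + y / n m \<in> {a..a+1}"
          using True npos[of m] by (auto simp: n_def field_simps)
        then show ?thesis using M(2) rho_nonneg[of y] by (simp add: abs_mult mult_right_mono)
      next
        case False then show ?thesis using rho_zero by simp
      qed
    qed
  qed
  then show ?thesis using eq rho_lborel(2) by (simp add: n_def)
qed


lemma eventually_large_mult:
  assumes "d > 0" shows "eventually (\<lambda>m. real (Suc m) * d \<ge> 1) sequentially"
proof -
  obtain N :: nat where N: "1 / d < real N" using reals_Archimedean2 by blast
  show ?thesis
  proof (rule eventually_sequentiallyI[of N])
    fix m assume "N \<le> m"
    then have "1 / d < real (Suc m)" using N by linarith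
    then show "1 \<le> real (Suc m) * d" using assms by (simp add: field_simps)
  qed
qed

lemma cc_cont_integrable:
  fixes f :: "real \<Rightarrow> real"
  assumes cont: "continuous_on UNIV f" and z: "\<And>x. x \<notin> {A..B} \<Longrightarrow> f x = 0"
  shows "integrable lborel f"
  using cc_integrable[OF cont z] by simp

lemma si_bound_integrable:
  fixes h :: "real \<Rightarrow> real"
  assumes "set_integrable lborel S h"
  shows "integrable lborel (\<lambda>x. indicator S x * \<bar>h x\<bar>)"
proof -
  have "integrable lborel (\<lambda>x. norm (indicator S x *\<^sub>R h x))"
    using assms unfolding set_integrable_def by (rule integrable_norm)
  then show ?thesis by (simp add: abs_mult)
qed

lemma weak_cont_ftc:
  fixes f h :: "real \<Rightarrow> real"
  assumes wd: "weak_deriv f h" and cont: "continuous_on UNIV f" and hm: "h \<in> borel_measurable lborel"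
    and ab: "a < b"
  shows "f b - f a = (\<integral>x. indicator {a<..b} x * h x \<partial>lborel)"
proof -
  define n where "n m = real (Suc m)" for m
  have npos: "n m > 0" for m by (simp add: n_def)
  define phi where "phi m x = 1 * RR (n m * x + (- n m * a)) + (-1) * RR (n m * x + (- n m * b))" for m x
  have sm: "smooth (phi m)" for m
    unfolding phi_def[abs_def] by (intro smooth_lincomb smooth_affine smooth_RR)
  have phi_a: "phi m x = 0" if "x \<le> a" for m x
  proof -
    have "n m * x + (- n m * a) \<le> 0" "n m * x + (- n m * b) \<le> 0"
      using that ab npos[of m] by (auto simp: algebra_simps intro: mult_left_mono)
    then show ?thesis by (simp add: phi_def RR_le0)
  qed
  have phi_b: "phi m x = 0" if "x \<ge> b + 1" for m x
  proof -
    have "n m \<ge> 1" by (simp add: n_def)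
    then have "n m * (x - b) \<ge> 1" "n m * (x - a) \<ge> 1"
      using that ab by (auto intro!: order_trans[OF _ mult_mono[of 1 "n m" 1]])
    then have "n m * x + (- n m * a) \<ge> 1" "n m * x + (- n m * b) \<ge> 1"
      by (auto simp: algebra_simps)
    then show ?thesis by (simp add: phi_def RR_ge1)
  qed
  have tf: "test_function (phi m)" for m
    by (rule smooth_test_function[OF sm, of a "b+1"]) (auto intro: phi_a phi_b)
  have dphi: "((phi m) has_real_derivative n m * rho (n m * x + (- n m * a)) - n m * rho (n m * x + (- n m * b))) (at x)" for m x
  proof -
    have "((\<lambda>x. n m * x + (- n m * a)) has_real_derivative n m) (at x)"
      "((\<lambda>x. n m * x + (- n m * b)) has_real_derivative n m) (at x)"
      by (auto intro!: derivative_eq_intros)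
    from DERIV_chain2[OF RR_deriv this(1)] DERIV_chain2[OF RR_deriv this(2)]
    show ?thesis unfolding phi_def[abs_def] by (auto intro!: derivative_eq_intros simp: algebra_simps)
  qed
  have deq: "deriv (phi m) = (\<lambda>x. n m * rho (n m * x + (- n m * a)) - n m * rho (n m * x + (- n m * b)))" for m
    by (rule smooth_deriv[OF sm dphi])
  have weak: "(\<integral>x. f x * deriv (phi m) x \<partial>lborel) = - (\<integral>x. h x * phi m x \<partial>lborel)" for m
    using wd tf unfolding weak_deriv_def by blast
  define K where "K c m x = f x * (n m * rho (n m * (x - c)))" for c m x
  have Kint: "integrable lborel (K c m)" for c m
  proof (rule cc_cont_integrable[of _ c "c + 1"])
    show "continuous_on UNIV (K c m)" unfolding K_def
      by (intro continuous_intros cont continuous_on_compose2[OF rho_cont]) auto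
    fix x assume x: "x \<notin> {c..c+1}"
    have "n m * (x - c) \<notin> {0<..<1}"
    proof
      assume "n m * (x - c) \<in> {0<..<1}"
      then have "x - c > 0" "n m * (x - c) < 1" using npos[of m] by (auto simp: zero_less_mult_iff)
      moreover have "n m \<ge> 1" by (simp add: n_def)
      ultimately have "x - c < 1" by (smt (verit) mult_le_cancel_right1)
      with \<open>x - c > 0\<close> x show False by auto
    qed
    then show "K c m x = 0" by (simp add: K_def rho_zero)
  qed
  have lhs: "(\<integral>x. f x * deriv (phi m) x \<partial>lborel) = integral\<^sup>L lborel (K a m) - integral\<^sup>L lborel (K b m)" for m
  proof -
    have "(\<lambda>x. f x * deriv (phi m) x) = (\<lambda>x. K a m x - K b m x)"
      by (simp add: deq K_def fun_eq_iff algebra_simps)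
    then show ?thesis using Kint by simp
  qed
  have Klim: "(\<lambda>m. integral\<^sup>L lborel (K c m)) \<longlonglongrightarrow> f c" for c
    using moll_conv[OF cont, of c] by (simp add: K_def[abs_def] n_def)
  have L1: "(\<lambda>m. (\<integral>x. f x * deriv (phi m) x \<partial>lborel)) \<longlonglongrightarrow> f a - f b"
    unfolding lhs by (intro tendsto_diff Klim)
  have L2: "(\<lambda>m. (\<integral>x. h x * phi m x \<partial>lborel)) \<longlonglongrightarrow> (\<integral>x. h x * indicator {a<..b} x \<partial>lborel)"
  proof (rule integral_dominated_convergence[where w="\<lambda>x. indicator {a..b+1} x * \<bar>h x\<bar>"])
    show "(\<lambda>x. h x * indicator {a<..b} x) \<in> borel_measurable lborel" using hm by simp
    show "(\<lambda>x. h x * phi m x) \<in> borel_measurable lborel" for m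
    proof -
      have "continuous_on UNIV (phi m)" by (rule smooth_cont[OF sm])
      then have "phi m \<in> borel_measurable lborel" by (simp add: borel_measurable_continuous_onI)
      then show ?thesis using hm by simp
    qed
    have si: "set_integrable lborel {a..b+1} h" using wd unfolding weak_deriv_def by blast
    show "integrable lborel (\<lambda>x. indicator {a..b+1} x * \<bar>h x\<bar>)" by (rule si_bound_integrable[OF si])
    show "AE x in lborel. (\<lambda>m. h x * phi m x) \<longlonglongrightarrow> h x * indicator {a<..b} x"
    proof (rule AE_I2)
      fix x
      have "eventually (\<lambda>m. phi m x = indicator {a<..b} x) sequentially"
      proof (cases "x \<le> a")
        case True then show ?thesis using phi_a by (simp add: indicator_def)
      next
        case False
        show ?thesis
        proof (cases "x \<le> b")
          case True
          have "eventually (\<lambda>m. n m * (x - a) \<ge> 1) sequentially"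
            unfolding n_def by (rule eventually_large_mult) (use False in simp)
          then show ?thesis
          proof eventually_elim
            case (elim m)
            have "n m * x + (- n m * a) \<ge> 1" using elim by (simp add: algebra_simps)
            moreover have "n m * x + (- n m * b) \<le> 0" using True npos[of m]
              by (simp add: algebra_simps mult_left_mono)
            ultimately show ?case using False True by (simp add: phi_def RR_ge1 RR_le0)
          qed
        next
          case False2: False
          have "eventually (\<lambda>m. n m * (x - b) \<ge> 1) sequentially"
            unfolding n_def by (rule eventually_large_mult) (use False2 in simp)
          then show ?thesis
          proof eventually_elim
            case (elim m)
            have "n m * (x - a) \<ge> n m * (x - b)" using ab npos[of m] by (simp add: mult_left_mono)
            then have "n m * x + (- n m * a) \<ge> 1" "n m * x + (- n m * b) \<ge> 1" using elim by (simp_all add: algebra_simps)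
            then show ?case using False2 by (simp add: phi_def RR_ge1)
          qed
        qed
      qed
      then have "(\<lambda>m. phi m x) \<longlonglongrightarrow> indicator {a<..b} x" by (rule tendsto_eventually)
      then show "(\<lambda>m. h x * phi m x) \<longlonglongrightarrow> h x * indicator {a<..b} x" by (intro tendsto_intros)
    qed
    show "AE x in lborel. norm (h x * phi m x) \<le> indicator {a..b+1} x * \<bar>h x\<bar>" for m
    proof (rule AE_I2)
      fix x
      show "norm (h x * phi m x) \<le> indicator {a..b+1} x * \<bar>h x\<bar>"
      proof (cases "x \<in> {a..b+1}")
        case True
        have "\<bar>phi m x\<bar> \<le> 1" unfolding phi_def using RR_bounds[of "n m * x + (- n m * a)"] RR_bounds[of "n m * x + (- n m * b)"] by auto
        then show ?thesis using True by (simp add: abs_mult mult_left_le)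
      next
        case False
        then have "phi m x = 0" using phi_a phi_b by (cases "x \<le> a") auto
        then show ?thesis by simp
      qed
    qed
  qed
  have "f a - f b = - (\<integral>x. h x * indicator {a<..b} x \<partial>lborel)"
  proof -
    have "(\<lambda>m. (\<integral>x. f x * deriv (phi m) x \<partial>lborel)) \<longlonglongrightarrow> - (\<integral>x. h x * indicator {a<..b} x \<partial>lborel)"
      unfolding weak by (rule tendsto_minus[OF L2])
    from LIMSEQ_unique[OF L1 this] show ?thesis .
  qed
  then show ?thesis by (simp add: mult.commute)
qed


lemma global_antideriv:
  fixes f :: "real \<Rightarrow> real"
  assumes cont: "continuous_on UNIV f"
  obtains G where "\<And>x. (G has_real_derivative f x) (at x)"
proof -
  define G where "G x = integral {0..x} f - integral {x..0} f" for x
  have ii: "\<And>a b. f integrable_on {a..b}"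
    by (rule integrable_continuous_real) (rule continuous_on_subset[OF cont], simp)
  have loc: "G x = integral {L..x} f - integral {L..0} f" if "L \<le> x" "L \<le> 0" for L x
  proof (cases "x \<ge> 0")
    case True
    have "integral {L..0} f + integral {0..x} f = integral {L..x} f"
      using Henstock_Kurzweil_Integration.integral_combine[where a=L and c=0 and b=x and f=f] True that ii by auto
    moreover have "integral {x..0} f = 0"
    proof (cases "x = 0")
      case True then show ?thesis by simp
    next
      case False then have "{x..0} = {}" using \<open>x \<ge> 0\<close> by auto
      then show ?thesis by simp
    qed
    ultimately show ?thesis by (simp add: G_def)
  next
    case False
    have "integral {L..x} f + integral {x..0} f = integral {L..0} f"
      using Henstock_Kurzweil_Integration.integral_combine[where a=L and c=x and b=0 and f=f] False that ii by auto
    moreover have "{0..x} = {}" using False by auto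
    ultimately show ?thesis by (simp add: G_def)
  qed
  have "(G has_real_derivative f t) (at t)" for t
  proof -
    define L where "L = min t 0 - 1"
    have "((\<lambda>x. integral {L..x} f) has_real_derivative f t) (at t within {L..t+1})"
      by (rule integral_has_real_derivative) (auto simp: L_def intro: continuous_on_subset[OF cont])
    moreover have "at t within {L..t+1} = at t" by (rule at_within_Icc_at) (auto simp: L_def)
    ultimately have "((\<lambda>x. integral {L..x} f - integral {L..0} f) has_real_derivative f t) (at t)"
      by (auto intro!: derivative_eq_intros)
    then show ?thesis
      by (rule has_field_derivative_transform_within_open[where S="{L<..}"])
         (auto simp: L_def intro!: loc[symmetric])
  qed
  then show ?thesis using that by blast
qed

lemma test_function_props:
  assumes "test_function psi"
  obtains R where "R > 0" "\<And>x. \<bar>x\<bar> \<ge> R \<Longrightarrow> psi x = 0" "\<And>x. \<bar>x\<bar> \<ge> R \<Longrightarrow> deriv psi x = 0"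
    "\<And>x. (psi has_real_derivative deriv psi x) (at x)"
    "continuous_on UNIV psi" "continuous_on UNIV (deriv psi)"
proof -
  have sm: "smooth psi" using assms by (rule test_function_smooth)
  obtain R0 where R0: "\<And>x. \<bar>x\<bar> > R0 \<Longrightarrow> psi x = 0" using assms unfolding test_function_def by blast
  define R where "R = \<bar>R0\<bar> + 1"
  have z: "\<And>x. \<bar>x\<bar> \<ge> R \<Longrightarrow> psi x = 0" using R0 by (auto simp: R_def)
  have z0: "\<And>x. \<bar>x\<bar> > \<bar>R0\<bar> \<Longrightarrow> psi x = 0" using R0 by auto
  have d: "\<And>x. (psi has_real_derivative deriv psi x) (at x)"
    using smooth_DERIV[OF sm, of 0] by simp
  have dz: "deriv psi x = 0" if "\<bar>x\<bar> \<ge> R" for x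
  proof -
    have "((\<lambda>_. 0) has_real_derivative 0) (at x)" by simp
    moreover have "open {y::real. \<bar>R0\<bar> < \<bar>y\<bar>}" by (intro open_Collect_less continuous_intros)
    ultimately have "(psi has_real_derivative 0) (at x)"
      by (rule has_field_derivative_transform_within_open[where S="{y. \<bar>y\<bar> > \<bar>R0\<bar>}"])
         (use that z0 in \<open>auto simp: R_def\<close>)
    then show ?thesis by (rule DERIV_imp_deriv)
  qed
  have c1: "continuous_on UNIV psi" by (rule smooth_cont[OF sm])
  have c2: "continuous_on UNIV (deriv psi)"
  proof -
    have "\<And>x. deriv psi differentiable (at x)"
    proof -
      fix x
      have "(deriv ^^ Suc 0) psi differentiable (at x)" using sm unfolding smooth_def by blast
      then show "deriv psi differentiable (at x)" by simp
    qed
    then show ?thesis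
      by (meson continuous_at_imp_continuous_on differentiable_imp_continuous_within)
  qed
  have "R > 0" by (simp add: R_def)
  from that[OF this z dz d c1 c2] show ?thesis .
qed

lemma parts_C1:
  fixes G f psi :: "real \<Rightarrow> real"
  assumes G: "\<And>x. (G has_real_derivative f x) (at x)" and cont: "continuous_on UNIV f"
    and tf: "test_function psi"
  shows "(\<integral>x. G x * deriv psi x \<partial>lborel) = - (\<integral>x. f x * psi x \<partial>lborel)"
proof -
  obtain R where R: "R > 0" "\<And>x. \<bar>x\<bar> \<ge> R \<Longrightarrow> psi x = 0" "\<And>x. \<bar>x\<bar> \<ge> R \<Longrightarrow> deriv psi x = 0"
    "\<And>x. (psi has_real_derivative deriv psi x) (at x)"
    "continuous_on UNIV psi" "continuous_on UNIV (deriv psi)"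
    using test_function_props[OF tf] by metis
  have Gc: "continuous_on UNIV G"
    by (meson G DERIV_continuous continuous_at_imp_continuous_on)
  have z1: "\<And>x. x \<notin> {-R..R} \<Longrightarrow> G x * deriv psi x = 0" using R(3) by auto
  have z2: "\<And>x. x \<notin> {-R..R} \<Longrightarrow> f x * psi x = 0" using R(2) by auto
  have c1: "continuous_on UNIV (\<lambda>x. G x * deriv psi x)" by (intro continuous_intros Gc R(6))
  have c2: "continuous_on UNIV (\<lambda>x. f x * psi x)" by (intro continuous_intros cont R(5))
  have e1: "(\<integral>x. G x * deriv psi x \<partial>lborel) = integral {-R..R} (\<lambda>x. G x * deriv psi x)"
    using cc_integrable(2)[OF c1 z1] .
  have e2: "(\<integral>x. f x * psi x \<partial>lborel) = integral {-R..R} (\<lambda>x. f x * psi x)"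
    using cc_integrable(2)[OF c2 z2] .
  have "((\<lambda>x. f x * psi x + G x * deriv psi x) has_integral (G R * psi R - G (-R) * psi (-R))) {-R..R}"
  proof (rule fundamental_theorem_of_calculus)
    show "- R \<le> R" using R(1) by simp
    fix x assume "x \<in> {-R..R}"
    have "((\<lambda>x. G x * psi x) has_real_derivative f x * psi x + G x * deriv psi x) (at x)"
      using DERIV_mult[OF G R(4)] by (simp add: algebra_simps)
    then show "((\<lambda>x. G x * psi x) has_vector_derivative f x * psi x + G x * deriv psi x) (at x within {-R..R})"
      by (simp add: has_real_derivative_iff_has_vector_derivative has_vector_derivative_at_within)
  qed
  moreover have "psi R = 0" "psi (-R) = 0"
    using R(1,2) by auto
  ultimately have "((\<lambda>x. f x * psi x + G x * deriv psi x) has_integral 0) {-R..R}" by simp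
  then have "integral {-R..R} (\<lambda>x. f x * psi x) + integral {-R..R} (\<lambda>x. G x * deriv psi x) = 0"
    using integral_add[of "\<lambda>x. f x * psi x" "{-R..R}" "\<lambda>x. G x * deriv psi x"]
      integrable_continuous_real[OF continuous_on_subset[OF c1]] integrable_continuous_real[OF continuous_on_subset[OF c2]]
    by (simp add: integral_unique)
  then show ?thesis using e1 e2 by simp
qed


lemma int_mult_ind: "A \<in> sets M \<Longrightarrow> integrable M f \<Longrightarrow> integrable M (\<lambda>x. (f x::real) * indicator A x)"
  using integrable_mult_indicator[of A M f] by (simp add: mult.commute)

lemma interval_zero_AE:
  fixes F :: "real \<Rightarrow> real"
  assumes Fm: "F \<in> borel_measurable lborel"
    and si: "\<And>a b. set_integrable lborel {a..b} F"
    and z: "\<And>u v. u < v \<Longrightarrow> (\<integral>x. indicator {u<..v} x * F x \<partial>lborel) = 0"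
  shows "AE x in lborel. F x = 0"
proof -
  have AEN: "AE x in lborel. indicator {- real N<..real N} x * F x = 0" for N :: nat
  proof -
    define FN where "FN x = indicator {- real N<..real N} x * F x" for x
    have FNm: "FN \<in> borel_measurable lborel" using Fm unfolding FN_def by simp
    have FNi: "integrable lborel FN"
    proof -
      have "integrable lborel (\<lambda>x. indicator {- real N<..real N} x *\<^sub>R (indicator {- real N..real N} x *\<^sub>R F x))"
        by (rule integrable_mult_indicator) (use si[of "- real N" "real N"] in \<open>auto simp: set_integrable_def\<close>)
      moreover have "(\<lambda>x. indicator {- real N<..real N} x *\<^sub>R (indicator {- real N..real N} x *\<^sub>R F x)) = FN"
        by (auto simp: FN_def fun_eq_iff indicator_def)
      ultimately show ?thesis by simp
    qed
    define P where "P x = max 0 (FN x)" for x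
    define Q where "Q x = max 0 (- FN x)" for x
    have Pi: "integrable lborel P" unfolding P_def using FNi by (intro integrable_max) auto
    have Qi: "integrable lborel Q" unfolding Q_def using FNi by (intro integrable_max) auto
    have Pnn: "P x \<ge> 0" for x by (simp add: P_def)
    have Qnn: "Q x \<ge> 0" for x by (simp add: Q_def)
    have PQ: "FN x = P x - Q x" for x by (simp add: P_def Q_def)
    define M1 where "M1 = density lborel (\<lambda>x. ennreal (P x))"
    define M2 where "M2 = density lborel (\<lambda>x. ennreal (Q x))"
    have em1: "emeasure M1 A = ennreal (\<integral>x. P x * indicator A x \<partial>lborel)" if "A \<in> sets borel" for A
    proof -
      have "emeasure M1 A = (\<integral>\<^sup>+x. ennreal (P x) * indicator A x \<partial>lborel)"
        unfolding M1_def using that Pi by (subst emeasure_density) auto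
      also have "\<dots> = (\<integral>\<^sup>+x. ennreal (P x * indicator A x) \<partial>lborel)"
        by (intro nn_integral_cong) (auto simp: indicator_def)
      also have "\<dots> = ennreal (\<integral>x. P x * indicator A x \<partial>lborel)"
        by (rule nn_integral_eq_integral) (use Pi that Pnn in \<open>auto intro!: int_mult_ind\<close>)
      finally show ?thesis .
    qed
    have em2: "emeasure M2 A = ennreal (\<integral>x. Q x * indicator A x \<partial>lborel)" if "A \<in> sets borel" for A
    proof -
      have "emeasure M2 A = (\<integral>\<^sup>+x. ennreal (Q x) * indicator A x \<partial>lborel)"
        unfolding M2_def using that Qi by (subst emeasure_density) auto
      also have "\<dots> = (\<integral>\<^sup>+x. ennreal (Q x * indicator A x) \<partial>lborel)"
        by (intro nn_integral_cong) (auto simp: indicator_def)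
      also have "\<dots> = ennreal (\<integral>x. Q x * indicator A x \<partial>lborel)"
        by (rule nn_integral_eq_integral) (use Qi that Qnn in \<open>auto intro!: int_mult_ind\<close>)
      finally show ?thesis .
    qed
    have diff: "(\<integral>x. FN x * indicator A x \<partial>lborel) = (\<integral>x. P x * indicator A x \<partial>lborel) - (\<integral>x. Q x * indicator A x \<partial>lborel)"
      if "A \<in> sets borel" for A
    proof -
      have "(\<lambda>x. FN x * indicator A x) = (\<lambda>x. P x * indicator A x - Q x * indicator A x)"
        by (auto simp: PQ fun_eq_iff algebra_simps)
      then show ?thesis using int_mult_ind[OF _ Pi, of A] int_mult_ind[OF _ Qi, of A] that by simp
    qed
    have half: "(\<integral>x. FN x * indicator {t<..} x \<partial>lborel) = 0" for t
    proof (cases "max t (- real N) < real N")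
      case True
      have "(\<lambda>x. FN x * indicator {t<..} x) = (\<lambda>x. indicator {max t (- real N)<..real N} x * F x)"
        by (auto simp: FN_def fun_eq_iff indicator_def)
      then show ?thesis using z[OF True] by simp
    next
      case False
      have "(\<lambda>x. FN x * indicator {t<..} x) = (\<lambda>x. 0)"
        using False by (auto simp: FN_def fun_eq_iff indicator_def)
      then show ?thesis by simp
    qed
    have M12: "M1 = M2"
    proof (rule measure_eqI_lessThan)
      show "sets M1 = sets borel" "sets M2 = sets borel" by (simp_all add: M1_def M2_def)
      show "emeasure M1 {x<..} < \<infinity>" for x using em1[of "{x<..}"] by simp
      show "emeasure M1 {x<..} = emeasure M2 {x<..}" for x
        using em1[of "{x<..}"] em2[of "{x<..}"] diff[of "{x<..}"] half[of x] by simp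
    qed
    have "AE x in lborel. FN x = 0"
    proof (rule sigma_finite_measure.density_zero[OF sigma_finite_lborel FNi])
      fix A :: "real set" assume A: "A \<in> sets lborel"
      then have A': "A \<in> sets borel" by simp
      have "ennreal (\<integral>x. P x * indicator A x \<partial>lborel) = ennreal (\<integral>x. Q x * indicator A x \<partial>lborel)"
        using em1[OF A'] em2[OF A'] M12 by simp
      moreover have "(\<integral>x. P x * indicator A x \<partial>lborel) \<ge> 0" "(\<integral>x. Q x * indicator A x \<partial>lborel) \<ge> 0"
        using Pnn Qnn by (auto intro!: integral_nonneg_AE)
      ultimately have "(\<integral>x. P x * indicator A x \<partial>lborel) = (\<integral>x. Q x * indicator A x \<partial>lborel)"
        by simp
      then have "(\<integral>x. FN x * indicator A x \<partial>lborel) = 0" using diff[OF A'] by simp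
      then show "set_lebesgue_integral lborel A FN = 0"
        by (simp add: set_lebesgue_integral_def mult.commute)
    qed
    then show ?thesis by (simp add: FN_def)
  qed
  have "AE x in lborel. \<forall>N::nat. indicator {- real N<..real N} x * F x = 0"
    unfolding AE_all_countable using AEN by blast
  then show ?thesis
  proof (rule AE_mp[OF _ AE_I2], intro impI)
    fix x assume all: "\<forall>N::nat. indicator {- real N<..real N} x * F x = 0"
    obtain N :: nat where "\<bar>x\<bar> < real N" using reals_Archimedean2 by blast
    then have "x \<in> {- real N<..real N}" by auto
    then show "F x = 0" using all[rule_format, of N] by simp
  qed
qed


lemma li_cc_integrable:
  fixes h k :: "real \<Rightarrow> real"
  assumes hm: "h \<in> borel_measurable lborel" and hi: "set_integrable lborel {a..b} h"
    and kc: "continuous_on UNIV k" and kz: "\<And>x. x \<notin> {a..b} \<Longrightarrow> k x = 0"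
  shows "integrable lborel (\<lambda>x. h x * k x)"
proof -
  obtain B where B: "B > 0" "\<And>x. x \<in> {a..b} \<Longrightarrow> \<bar>k x\<bar> \<le> B" using cont_bounded_Icc[OF kc] by metis
  show ?thesis
  proof (rule Bochner_Integration.integrable_bound[where f="\<lambda>x. B * (indicator {a..b} x * \<bar>h x\<bar>)"])
    show "integrable lborel (\<lambda>x. B * (indicator {a..b} x * \<bar>h x\<bar>))"
      using si_bound_integrable[OF hi] by simp
    show "(\<lambda>x. h x * k x) \<in> borel_measurable lborel"
      using hm borel_measurable_continuous_onI[OF kc] by simp
    show "AE x in lborel. norm (h x * k x) \<le> norm (B * (indicator {a..b} x * \<bar>h x\<bar>))"
    proof (rule AE_I2)
      fix x show "norm (h x * k x) \<le> norm (B * (indicator {a..b} x * \<bar>h x\<bar>))"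
      proof (cases "x \<in> {a..b}")
        case True
        have "\<bar>h x\<bar> * \<bar>k x\<bar> \<le> \<bar>h x\<bar> * B" using B(2)[OF True] by (intro mult_left_mono) auto
        then show ?thesis using True B by (simp add: abs_mult mult.commute)
      next
        case False then show ?thesis using kz by simp
      qed
    qed
  qed
qed

definition Sm :: "nat \<Rightarrow> real \<Rightarrow> real \<Rightarrow> real \<Rightarrow> real" where
  "Sm m c d x = 1 * RR (real (Suc m) * x + (- real (Suc m) * c)) + (-1) * RR (real (Suc m) * x + (- real (Suc m) * d))"

lemma Sm_smooth: "smooth (Sm m c d)"
  unfolding Sm_def[abs_def] by (intro smooth_lincomb smooth_affine smooth_RR)

lemma Sm_cont: "continuous_on UNIV (Sm m c d)" by (rule smooth_cont[OF Sm_smooth])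

lemma Sm_le: "x \<le> c \<Longrightarrow> c \<le> d \<Longrightarrow> Sm m c d x = 0"
proof -
  assume a: "x \<le> c" "c \<le> d"
  have "real (Suc m) * x \<le> real (Suc m) * c" "real (Suc m) * x \<le> real (Suc m) * d"
    using a by (auto intro!: mult_left_mono)
  then have "real (Suc m) * x + (- real (Suc m) * c) \<le> 0" "real (Suc m) * x + (- real (Suc m) * d) \<le> 0"
    by (simp_all only: mult_minus_left)
  then show ?thesis by (simp add: Sm_def RR_le0)
qed

lemma Sm_ge: "x \<ge> d + 1 \<Longrightarrow> c \<le> d \<Longrightarrow> Sm m c d x = 0"
proof -
  assume that: "x \<ge> d + 1" "c \<le> d"
  have "real (Suc m) * (x - d) \<ge> 1 * 1" "real (Suc m) * (x - c) \<ge> 1 * 1"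
    using that by (intro mult_mono; simp)+
  then have "real (Suc m) * x + (- real (Suc m) * c) \<ge> 1" "real (Suc m) * x + (- real (Suc m) * d) \<ge> 1"
    by (auto simp: algebra_simps)
  then show ?thesis by (simp add: Sm_def RR_ge1)
qed

lemma Sm_zero: "x \<notin> {c..d+1} \<Longrightarrow> c \<le> d \<Longrightarrow> Sm m c d x = 0"
  using Sm_le Sm_ge by (cases "x \<le> c") auto

lemma Sm_abs: "\<bar>Sm m c d x\<bar> \<le> 1"
  unfolding Sm_def using RR_bounds[of "real (Suc m) * x + (- real (Suc m) * c)"] RR_bounds[of "real (Suc m) * x + (- real (Suc m) * d)"]
  by auto

lemma Sm_pointwise:
  assumes "c < d" shows "(\<lambda>m. Sm m c d x) \<longlonglongrightarrow> indicator {c<..d} x"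
proof -
  define n where "n m = real (Suc m)" for m
  have npos: "n m > 0" for m by (simp add: n_def)
  have "eventually (\<lambda>m. Sm m c d x = indicator {c<..d} x) sequentially"
  proof (cases "x \<le> c")
    case True then show ?thesis using Sm_le[of x c d] assms by (simp add: indicator_def)
  next
    case False
    show ?thesis
    proof (cases "x \<le> d")
      case True
      have "eventually (\<lambda>m. n m * (x - c) \<ge> 1) sequentially"
        unfolding n_def by (rule eventually_large_mult) (use False in simp)
      then show ?thesis
      proof eventually_elim
        case (elim m)
        have "n m * x + (- n m * c) \<ge> 1" using elim by (simp add: algebra_simps)
        moreover have "n m * x + (- n m * d) \<le> 0" using True npos[of m]
          by (simp add: algebra_simps mult_left_mono)
        ultimately show ?case using False True by (simp add: Sm_def RR_ge1 RR_le0 n_def)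
      qed
    next
      case False2: False
      have "eventually (\<lambda>m. n m * (x - d) \<ge> 1) sequentially"
        unfolding n_def by (rule eventually_large_mult) (use False2 in simp)
      then show ?thesis
      proof eventually_elim
        case (elim m)
        have "n m * (x - c) \<ge> n m * (x - d)" using assms npos[of m] by (simp add: mult_left_mono)
        then have "n m * x + (- n m * c) \<ge> 1" "n m * x + (- n m * d) \<ge> 1" using elim by (simp_all add: algebra_simps)
        then show ?case using False2 by (simp add: Sm_def RR_ge1 n_def)
      qed
    qed
  qed
  then show ?thesis by (rule tendsto_eventually)
qed

lemma Sm_lim:
  fixes h :: "real \<Rightarrow> real"
  assumes hm: "h \<in> borel_measurable lborel" and si: "set_integrable lborel {c..d+1} h" and cd: "c < d"
  shows "(\<lambda>m. \<integral>x. h x * Sm m c d x \<partial>lborel) \<longlonglongrightarrow> (\<integral>x. h x * indicator {c<..d} x \<partial>lborel)"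
proof (rule integral_dominated_convergence[where w="\<lambda>x. indicator {c..d+1} x * \<bar>h x\<bar>"])
  show "(\<lambda>x. h x * indicator {c<..d} x) \<in> borel_measurable lborel" using hm by simp
  show "(\<lambda>x. h x * Sm m c d x) \<in> borel_measurable lborel" for m
    using hm borel_measurable_continuous_onI[OF Sm_cont] by simp
  show "integrable lborel (\<lambda>x. indicator {c..d+1} x * \<bar>h x\<bar>)" by (rule si_bound_integrable[OF si])
  show "AE x in lborel. (\<lambda>m. h x * Sm m c d x) \<longlonglongrightarrow> h x * indicator {c<..d} x"
    by (rule AE_I2) (intro tendsto_intros Sm_pointwise cd)
  show "AE x in lborel. norm (h x * Sm m c d x) \<le> indicator {c..d+1} x * \<bar>h x\<bar>" for m
  proof (rule AE_I2)
    fix x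
    show "norm (h x * Sm m c d x) \<le> indicator {c..d+1} x * \<bar>h x\<bar>"
    proof (cases "x \<in> {c..d+1}")
      case True
      then show ?thesis using Sm_abs[of m c d x] by (simp add: abs_mult mult_left_le)
    next
      case False
      then show ?thesis using Sm_zero[of x c d m] cd by simp
    qed
  qed
qed

lemma Sm_int_lim:
  assumes cd: "c < d"
  shows "(\<lambda>m. \<integral>x. Sm m c d x \<partial>lborel) \<longlonglongrightarrow> d - c"
proof -
  have si: "set_integrable lborel {c..d+1} (\<lambda>x. 1::real)"
    by (rule borel_integrable_atLeastAtMost') simp
  have "(\<lambda>m. \<integral>x. 1 * Sm m c d x \<partial>lborel) \<longlonglongrightarrow> (\<integral>x. 1 * indicator {c<..d} x \<partial>lborel)"
    by (rule Sm_lim[OF _ si cd]) simp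
  moreover have "(\<integral>x. 1 * indicator {c<..d} x \<partial>lborel) = d - c"
    using cd by simp
  ultimately show ?thesis by simp
qed


lemma weak_C1_AE:
  fixes g g1 G :: "real \<Rightarrow> real"
  assumes wd: "weak_deriv g g1" and cont: "continuous_on UNIV g1" and gm: "g \<in> borel_measurable lborel"
    and G: "\<And>x. (G has_real_derivative g1 x) (at x)"
  shows "\<exists>c. AE x in lborel. g x = G x + c"
proof -
  have Gc: "continuous_on UNIV G"
    by (meson G DERIV_continuous continuous_at_imp_continuous_on)
  have Gm: "G \<in> borel_measurable lborel" using borel_measurable_continuous_onI[OF Gc] by simp
  define D where "D x = g x - G x" for x
  have Dm: "D \<in> borel_measurable lborel" using gm Gm unfolding D_def by simp
  have gsi: "set_integrable lborel {a..b} g" for a b using wd unfolding weak_deriv_def by blast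
  have Gsi: "set_integrable lborel {a..b} G" for a b
    by (rule borel_integrable_atLeastAtMost') (rule continuous_on_subset[OF Gc], simp)
  have Dsi: "set_integrable lborel {a..b} D" for a b
    unfolding D_def by (rule set_integral_diff(1)[OF gsi Gsi])
  have Dk_int: "integrable lborel (\<lambda>x. D x * k x)"
    if "continuous_on UNIV k" "\<And>x. x \<notin> {a..b} \<Longrightarrow> k x = 0" for k a b
    by (rule li_cc_integrable[OF Dm Dsi that])
  have orth: "(\<integral>x. D x * deriv psi x \<partial>lborel) = 0" if tf: "test_function psi" for psi
  proof -
    obtain R where R: "R > 0" "\<And>x. \<bar>x\<bar> \<ge> R \<Longrightarrow> psi x = 0" "\<And>x. \<bar>x\<bar> \<ge> R \<Longrightarrow> deriv psi x = 0"
      "\<And>x. (psi has_real_derivative deriv psi x) (at x)"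
      "continuous_on UNIV psi" "continuous_on UNIV (deriv psi)"
      using test_function_props[OF tf] by metis
    have z: "\<And>x. x \<notin> {-R..R} \<Longrightarrow> deriv psi x = 0" using R(3) by auto
    have i1: "integrable lborel (\<lambda>x. g x * deriv psi x)"
      by (rule li_cc_integrable[OF gm gsi R(6) z])
    have i2: "integrable lborel (\<lambda>x. G x * deriv psi x)"
      by (rule li_cc_integrable[OF Gm Gsi R(6) z])
    have e1: "(\<integral>x. g x * deriv psi x \<partial>lborel) = - (\<integral>x. g1 x * psi x \<partial>lborel)"
      using wd tf unfolding weak_deriv_def by blast
    have e2: "(\<integral>x. G x * deriv psi x \<partial>lborel) = - (\<integral>x. g1 x * psi x \<partial>lborel)"
      by (rule parts_C1[OF G cont tf])
    have "(\<lambda>x. D x * deriv psi x) = (\<lambda>x. g x * deriv psi x - G x * deriv psi x)"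
      by (auto simp: D_def fun_eq_iff algebra_simps)
    then show ?thesis using i1 i2 e1 e2 by simp
  qed
  define J where "J u v = (\<integral>x. D x * indicator {u<..v} x \<partial>lborel)" for u v
  have Jrel: "J u v = (v - u) * J 0 1" if uv: "u < v" for u v
  proof -
    define I where "I m c d = (\<integral>x. Sm m c d x \<partial>lborel)" for m c d
    define lam where "lam m = I m u v / I m 0 1" for m
    define chi where "chi m x = 1 * Sm m u v x + (- lam m) * Sm m 0 1 x" for m x
    define A where "A = min u 0 - 1"
    define B where "B = max v 1 + 2"
    have chi_sm: "smooth (chi m)" for m unfolding chi_def[abs_def] by (intro smooth_lincomb Sm_smooth)
    have chi_cont: "continuous_on UNIV (chi m)" for m by (rule smooth_cont[OF chi_sm])
    have chi_z: "chi m x = 0" if "x \<notin> {A<..<B}" for m x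
    proof -
      have "x \<notin> {u..v+1}" "x \<notin> {0..1+1::real}" using that uv by (auto simp: A_def B_def)
      then show ?thesis using Sm_zero[of x u v m] Sm_zero[of x 0 1 m] uv by (simp add: chi_def)
    qed
    have chi_z': "chi m x = 0" if "x \<notin> {A..B}" for m x using chi_z[of x m] that by auto
    have Sint: "integrable lborel (Sm m c d)" if "c < d" for m c d
      by (rule cc_cont_integrable[OF Sm_cont, where A=c and B="d+1"]) (use Sm_zero that in auto)
    have Ilim: "(\<lambda>m. I m c d) \<longlonglongrightarrow> d - c" if "c < d" for c d
      unfolding I_def using Sm_int_lim[OF that] .
    have ev: "eventually (\<lambda>m. I m 0 1 \<noteq> 0) sequentially"
    proof -
      have "(\<lambda>m. I m 0 1) \<longlonglongrightarrow> 1" using Ilim[of 0 1] by simp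
      from tendsto_imp_eventually_ne[OF this, of 0] show ?thesis by simp
    qed
    have zero_ev: "eventually (\<lambda>m. (\<integral>x. D x * chi m x \<partial>lborel) = 0) sequentially"
      using ev
    proof eventually_elim
      case (elim m)
      have "integral {A..B} (chi m) = (\<integral>x. chi m x \<partial>lborel)"
        using cc_integrable(2)[OF chi_cont chi_z'] by simp
      also have "\<dots> = I m u v - lam m * I m 0 1"
        using Sint[OF uv, of m] Sint[of 0 1 m] by (simp add: chi_def I_def)
      also have "\<dots> = 0" using elim by (simp add: lam_def)
      finally have i0: "integral {A..B} (chi m) = 0" .
      have tf: "test_function (\<lambda>x. integral {A..x} (chi m))"
        and dd: "deriv (\<lambda>x. integral {A..x} (chi m)) = chi m"
        using test_from_deriv[OF chi_sm chi_z i0] by auto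
      show ?case using orth[OF tf] unfolding dd .
    qed
    have split: "(\<integral>x. D x * chi m x \<partial>lborel) = (\<integral>x. D x * Sm m u v x \<partial>lborel) - lam m * (\<integral>x. D x * Sm m 0 1 x \<partial>lborel)" for m
    proof -
      have a1: "integrable lborel (\<lambda>x. D x * Sm m u v x)"
        by (rule Dk_int[OF Sm_cont, where a=u and b="v+1"]) (use Sm_zero uv in auto)
      have a2: "integrable lborel (\<lambda>x. D x * Sm m 0 1 x)"
        by (rule Dk_int[OF Sm_cont, where a=0 and b="1+1"]) (use Sm_zero in auto)
      have "(\<lambda>x. D x * chi m x) = (\<lambda>x. D x * Sm m u v x - lam m * (D x * Sm m 0 1 x))"
        by (auto simp: chi_def fun_eq_iff algebra_simps)
      then show ?thesis using a1 a2 by simp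
    qed
    have Dsi1: "set_integrable lborel {c..d+1} D" for c d by (rule Dsi)
    have L: "(\<lambda>m. (\<integral>x. D x * chi m x \<partial>lborel)) \<longlonglongrightarrow> J u v - (v - u) / (1 - 0) * J 0 1"
      unfolding split J_def lam_def
      by (intro tendsto_intros Sm_lim[OF Dm Dsi1] uv Ilim) simp_all
    have "J u v - (v - u) / (1 - 0) * J 0 1 = 0"
      using LIMSEQ_unique[OF L tendsto_eventually[OF zero_ev]] .
    then show ?thesis by simp
  qed
  define c where "c = J 0 1"
  have "AE x in lborel. D x - c = 0"
  proof (rule interval_zero_AE)
    show "(\<lambda>x. D x - c) \<in> borel_measurable lborel" using Dm by simp
    show "set_integrable lborel {a..b} (\<lambda>x. D x - c)" for a b
      by (rule set_integral_diff(1)[OF Dsi]) (rule borel_integrable_atLeastAtMost', simp)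
    fix u v :: real assume uv: "u < v"
    have i1: "integrable lborel (\<lambda>x. indicator {u<..v} x * D x)"
    proof -
      have "integrable lborel (\<lambda>x. indicator {u<..v} x *\<^sub>R (indicator {u..v} x *\<^sub>R D x))"
        by (rule integrable_mult_indicator) (use Dsi[of u v] in \<open>auto simp: set_integrable_def\<close>)
      moreover have "(\<lambda>x. indicator {u<..v} x *\<^sub>R (indicator {u..v} x *\<^sub>R D x)) = (\<lambda>x. indicator {u<..v} x * D x)"
        by (auto simp: fun_eq_iff indicator_def)
      ultimately show ?thesis by simp
    qed
    have i2: "integrable lborel (\<lambda>x. indicator {u<..v} x * c)"
      using uv by simp
    have "(\<lambda>x. indicator {u<..v} x * (D x - c)) = (\<lambda>x. indicator {u<..v} x * D x - indicator {u<..v} x * c)"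
      by (auto simp: fun_eq_iff algebra_simps)
    then have "(\<integral>x. indicator {u<..v} x * (D x - c) \<partial>lborel) = J u v - (v - u) * c"
      using i1 i2 uv by (simp add: J_def mult.commute)
    then show "(\<integral>x. indicator {u<..v} x * (D x - c) \<partial>lborel) = 0"
      using Jrel[OF uv] by (simp add: c_def)
  qed
  then have "AE x in lborel. g x = G x + c" by eventually_elim (simp add: D_def)
  then show ?thesis by blast
qed


lemma si_Ioc:
  fixes h :: "real \<Rightarrow> real"
  assumes "set_integrable lborel {a..b} h"
  shows "integrable lborel (\<lambda>x. indicator {a<..b} x * h x)"
proof -
  have "integrable lborel (\<lambda>x. indicator {a<..b} x *\<^sub>R (indicator {a..b} x *\<^sub>R h x))"
    by (rule integrable_mult_indicator) (use assms in \<open>auto simp: set_integrable_def\<close>)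
  moreover have "(\<lambda>x. indicator {a<..b} x *\<^sub>R (indicator {a..b} x *\<^sub>R h x)) = (\<lambda>x. indicator {a<..b} x * h x)"
    by (auto simp: fun_eq_iff indicator_def)
  ultimately show ?thesis by simp
qed

lemma mvt_bound:
  fixes H f :: "real \<Rightarrow> real"
  assumes H: "\<And>x. (H has_real_derivative f x) (at x)"
  shows "\<exists>\<xi>. \<bar>\<xi>\<bar> \<le> \<bar>s\<bar> \<and> H s - H 0 = s * f \<xi>"
proof -
  consider "s > 0" | "s < 0" | "s = 0" by linarith
  then show ?thesis
  proof cases
    case 1
    obtain z where "0 < z" "z < s" "H s - H 0 = (s - 0) * f z" using MVT2[OF 1 H] by blast
    then show ?thesis by (intro exI[of _ z]) auto
  next
    case 2
    obtain z where "s < z" "z < 0" "H 0 - H s = (0 - s) * f z" using MVT2[OF 2 H] by blast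
    then show ?thesis by (intro exI[of _ z]) (auto simp: algebra_simps)
  next
    case 3 then show ?thesis by (intro exI[of _ 0]) auto
  qed
qed

lemma ftc_bound:
  fixes g1 g2 :: "real \<Rightarrow> real"
  assumes ftc: "\<And>a b. a < b \<Longrightarrow> g1 b - g1 a = (\<integral>x. indicator {a<..b} x * g2 x \<partial>lborel)"
    and si: "\<And>a b. set_integrable lborel {a..b} g2"
    and s: "\<bar>s\<bar> \<le> \<delta>"
  shows "\<bar>g1 s - g1 0\<bar> \<le> (\<integral>x. indicator {-\<delta>..\<delta>} x * \<bar>g2 x\<bar> \<partial>lborel)"
proof -
  have big: "integrable lborel (\<lambda>x. indicator {-\<delta>..\<delta>} x * \<bar>g2 x\<bar>)" by (rule si_bound_integrable[OF si])
  have gen: "\<bar>\<integral>x. indicator {a<..b} x * g2 x \<partial>lborel\<bar> \<le> (\<integral>x. indicator {-\<delta>..\<delta>} x * \<bar>g2 x\<bar> \<partial>lborel)"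
    if "-\<delta> \<le> a" "b \<le> \<delta>" for a b
  proof -
    have i: "integrable lborel (\<lambda>x. indicator {a<..b} x * g2 x)" by (rule si_Ioc[OF si])
    have "\<bar>\<integral>x. indicator {a<..b} x * g2 x \<partial>lborel\<bar> \<le> (\<integral>x. \<bar>indicator {a<..b} x * g2 x\<bar> \<partial>lborel)"
      by (rule integral_abs_bound)
    also have "\<dots> \<le> (\<integral>x. indicator {-\<delta>..\<delta>} x * \<bar>g2 x\<bar> \<partial>lborel)"
    proof (rule integral_mono)
      show "integrable lborel (\<lambda>x. \<bar>indicator {a<..b} x * g2 x\<bar>)" using i by simp
      show "integrable lborel (\<lambda>x. indicator {-\<delta>..\<delta>} x * \<bar>g2 x\<bar>)" by (rule big)
      fix x show "\<bar>indicator {a<..b} x * g2 x\<bar> \<le> indicator {-\<delta>..\<delta>} x * \<bar>g2 x\<bar>"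
        using that by (auto simp: indicator_def abs_mult)
    qed
    finally show ?thesis .
  qed
  consider "s > 0" | "s < 0" | "s = 0" by linarith
  then show ?thesis
  proof cases
    case 1 then show ?thesis using ftc[OF 1] gen[of 0 s] s by auto
  next
    case 2
    have "\<bar>g1 s - g1 0\<bar> = \<bar>g1 0 - g1 s\<bar>" by simp
    then show ?thesis using ftc[OF 2] gen[of s 0] s by auto
  next
    case 3
    have "0 \<le> (\<integral>x. indicator {-\<delta>..\<delta>} x * \<bar>g2 x\<bar> \<partial>lborel)" by (intro integral_nonneg_AE) auto
    then show ?thesis using 3 by simp
  qed
qed

lemma amgm_bound:
  fixes h :: "real \<Rightarrow> real"
  assumes si: "set_integrable lborel {-\<delta>..\<delta>} h" and si2: "set_integrable lborel {-\<delta>..\<delta>} (\<lambda>x. (h x)\<^sup>2)"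
    and t: "t > 0" and d: "\<delta> \<ge> 0"
  shows "(\<integral>x. indicator {-\<delta>..\<delta>} x * \<bar>h x\<bar> \<partial>lborel)
           \<le> (\<integral>x. indicator {-\<delta>..\<delta>} x * (h x)\<^sup>2 \<partial>lborel) / (2 * t) + t * \<delta>"
proof -
  define k where "k x = indicator {-\<delta>..\<delta>} x * (h x)\<^sup>2" for x
  define l where "l x = indicator {-\<delta>..\<delta>} x * (t / 2)" for x :: real
  have i1: "integrable lborel (\<lambda>x. indicator {-\<delta>..\<delta>} x * \<bar>h x\<bar>)" by (rule si_bound_integrable[OF si])
  have i2: "integrable lborel k"
    using si2 unfolding set_integrable_def k_def[abs_def] by simp
  have i3: "integrable lborel l" unfolding l_def[abs_def] by (intro integrable_mult_left integrable_real_indicator) (use d in auto)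
  have i4: "integrable lborel (\<lambda>x. k x / (2 * t) + l x)"
    by (intro Bochner_Integration.integrable_add integrable_divide_zero i2 i3)
  have "(\<integral>x. indicator {-\<delta>..\<delta>} x * \<bar>h x\<bar> \<partial>lborel) \<le> (\<integral>x. k x / (2 * t) + l x \<partial>lborel)"
  proof (rule integral_mono[OF i1 i4])
    fix x
    have "(\<bar>h x\<bar> - t)\<^sup>2 \<ge> 0" by simp
    then have "2 * t * \<bar>h x\<bar> \<le> (h x)\<^sup>2 + t\<^sup>2" by (simp add: power2_eq_square algebra_simps)
    then have "\<bar>h x\<bar> \<le> (h x)\<^sup>2 / (2 * t) + t / 2" using t by (simp add: field_simps power2_eq_square)
    then show "indicator {-\<delta>..\<delta>} x * \<bar>h x\<bar> \<le> k x / (2 * t) + l x"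
      by (auto simp: indicator_def k_def l_def)
  qed
  also have "\<dots> = (\<integral>x. k x \<partial>lborel) / (2 * t) + (\<integral>x. l x \<partial>lborel)"
    using i2 i3 by simp
  also have "(\<integral>x. l x \<partial>lborel) = t * \<delta>"
    using d by (simp add: l_def)
  finally show ?thesis by (simp add: k_def)
qed

lemma A2_small:
  fixes h :: "real \<Rightarrow> real"
  assumes hm: "h \<in> borel_measurable lborel" and si2: "\<And>a b. set_integrable lborel {a..b} (\<lambda>x. (h x)\<^sup>2)"
    and eta: "\<eta> > 0"
  shows "\<exists>\<delta>0>0. \<forall>\<delta>. 0 \<le> \<delta> \<and> \<delta> \<le> \<delta>0 \<longrightarrow> (\<integral>x. indicator {-\<delta>..\<delta>} x * (h x)\<^sup>2 \<partial>lborel) \<le> \<eta>"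
proof -
  define A2 where "A2 \<delta> = (\<integral>x. indicator {-\<delta>..\<delta>} x * (h x)\<^sup>2 \<partial>lborel)" for \<delta>
  have int: "integrable lborel (\<lambda>x. indicator {-\<delta>..\<delta>} x * (h x)\<^sup>2)" for \<delta>
    using si2[of "-\<delta>" \<delta>] unfolding set_integrable_def by simp
  have mono: "A2 \<delta> \<le> A2 \<delta>'" if "\<delta> \<le> \<delta>'" for \<delta> \<delta>'
    unfolding A2_def by (rule integral_mono[OF int int]) (use that in \<open>auto simp: indicator_def\<close>)
  have lim: "(\<lambda>m. A2 (1 / real (Suc m))) \<longlonglongrightarrow> (\<integral>x. indicator {0} x * (h x)\<^sup>2 \<partial>lborel)"
    unfolding A2_def
  proof (rule integral_dominated_convergence[where w="\<lambda>x. indicator {-1..1} x * (h x)\<^sup>2"])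
    show "(\<lambda>x. indicator {0} x * (h x)\<^sup>2) \<in> borel_measurable lborel" using hm by simp
    show "(\<lambda>x. indicator {- (1 / real (Suc m))..1 / real (Suc m)} x * (h x)\<^sup>2) \<in> borel_measurable lborel" for m
      using hm by simp
    show "integrable lborel (\<lambda>x. indicator {-1..1} x * (h x)\<^sup>2)" using int[of 1] by simp
    show "AE x in lborel. (\<lambda>m. indicator {- (1 / real (Suc m))..1 / real (Suc m)} x * (h x)\<^sup>2) \<longlonglongrightarrow> indicator {0} x * (h x)\<^sup>2"
    proof (rule AE_I2)
      fix x :: real
      have "eventually (\<lambda>m. indicator {- (1 / real (Suc m))..1 / real (Suc m)} x * (h x)\<^sup>2 = indicator {0} x * (h x)\<^sup>2) sequentially"
      proof (cases "x = 0")
        case True then show ?thesis by (simp add: indicator_def)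
      next
        case False
        then have "\<bar>x\<bar> / 2 > 0" by simp
        from eventually_large_mult[OF this] show ?thesis
        proof eventually_elim
          case (elim m)
          have "1 \<le> real (Suc m) * (\<bar>x\<bar> / 2)" using elim by simp
          then have "2 / real (Suc m) \<le> \<bar>x\<bar>" by (simp add: field_simps)
          moreover have "1 / real (Suc m) < 2 / real (Suc m)" by (simp add: divide_strict_right_mono)
          ultimately have "\<bar>x\<bar> > 1 / real (Suc m)" by linarith
          then show ?case using False by (auto simp: indicator_def)
        qed
      qed
      then show "(\<lambda>m. indicator {- (1 / real (Suc m))..1 / real (Suc m)} x * (h x)\<^sup>2) \<longlonglongrightarrow> indicator {0} x * (h x)\<^sup>2"
        by (rule tendsto_eventually)
    qed
    show "AE x in lborel. norm (indicator {- (1 / real (Suc m))..1 / real (Suc m)} x * (h x)\<^sup>2) \<le> indicator {-1..1} x * (h x)\<^sup>2" for m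
    proof (rule AE_I2)
      fix x :: real
      have le: "1 / real (Suc m) \<le> 1" by (simp add: field_simps)
      show "norm (indicator {- (1 / real (Suc m))..1 / real (Suc m)} x * (h x)\<^sup>2) \<le> indicator {-1..1} x * (h x)\<^sup>2"
      proof (cases "x \<in> {- (1 / real (Suc m))..1 / real (Suc m)}")
        case True
        then have "x \<in> {-1..1}" using le unfolding atLeastAtMost_iff by linarith
        then show ?thesis using True by simp
      next
        case False
        then have "indicator {- (1 / real (Suc m))..1 / real (Suc m)} x = (0::real)" by (rule indicator_simps(2))
        then show ?thesis by simp
      qed
    qed
  qed
  moreover have "(\<integral>x. indicator {0} x * (h x)\<^sup>2 \<partial>lborel) = 0"
  proof -
    have "AE x in lborel. indicator {0} x * (h x)\<^sup>2 = (0::real)"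
      using AE_lborel_singleton[of 0] by eventually_elim simp
    then show ?thesis by (rule integral_eq_zero_AE)
  qed
  ultimately have "(\<lambda>m. A2 (1 / real (Suc m))) \<longlonglongrightarrow> 0" by simp
  then obtain N where N: "\<And>m. m \<ge> N \<Longrightarrow> \<bar>A2 (1 / real (Suc m))\<bar> < \<eta>"
    using eta unfolding LIMSEQ_def dist_real_def by auto
  show ?thesis
  proof (intro exI[of _ "1 / real (Suc N)"] conjI allI impI)
    show "1 / real (Suc N) > 0" by simp
    fix \<delta> assume "0 \<le> \<delta> \<and> \<delta> \<le> 1 / real (Suc N)"
    then have "A2 \<delta> \<le> A2 (1 / real (Suc N))" by (intro mono) auto
    also have "\<dots> \<le> \<eta>" using N[of N] by simp
    finally show "(\<integral>x. indicator {-\<delta>..\<delta>} x * (h x)\<^sup>2 \<partial>lborel) \<le> \<eta>" by (simp add: A2_def)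
  qed
qed


lemma h1_arith:
  fixes P A2d eta e tau s :: real
  assumes P0: "P \<ge> 0" and A2d: "A2d \<le> eta" and e: "e > 0" and tau0: "tau > 0" and s0: "s > 0"
    and eta_def: "eta = e * tau / (P + 1)"
  shows "P * (A2d / (2 * (tau * s))) \<le> e / (2 * s)"
proof -
  have ts0: "tau * s > 0" using tau0 s0 by simp
  have p1: "P + 1 > 0" using P0 by simp
  have f1: "P * A2d \<le> P * eta" using A2d P0 by (intro mult_left_mono) auto
  have f2: "P * eta = e * tau * (P / (P + 1))" using p1 unfolding eta_def by (simp add: field_simps)
  have f3: "e * tau * (P / (P + 1)) \<le> e * tau * 1" using p1 e tau0 by (intro mult_left_mono) auto
  have f4: "P * A2d \<le> e * tau" using f1 f2 f3 by linarith
  have "(P * A2d) / (2 * (tau * s)) \<le> (e * tau) / (2 * (tau * s))"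
    using ts0 f4 by (intro divide_right_mono) auto
  also have "(e * tau) / (2 * (tau * s)) = e / (2 * s)" using tau0 s0 by (simp add: field_simps)
  finally show ?thesis by (simp add: times_divide_eq_right)
qed

theorem proposition2:
  fixes V g g1 g2 :: "real \<Rightarrow> real" and b :: real
  assumes "ess_bounded V"
    and "b > 0"
    and "AE x in lborel. x \<notin> {-b<..<b} \<longrightarrow> V x = 0"
    and "(\<integral>x. V x \<partial>lborel) = 0"
    and "W22_loc_with g g1 g2"
    and "continuous_on UNIV g1"
  shows "(\<lambda>\<alpha>. \<alpha> * (\<integral>x. (\<alpha> * V (\<alpha> * x)) * g x \<partial>lborel)
              - g1 0 * (\<integral>x. x * V x \<partial>lborel))
         \<in> o[at_top](\<lambda>\<alpha>. \<alpha> powr (-1/2))"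
proof -
  note bpos = assms(2) and Vz = assms(3) and V0 = assms(4) and cont = assms(6)
  obtain C where Vm: "V \<in> borel_measurable lborel" and VC: "AE x in lborel. \<bar>V x\<bar> \<le> C"
    using assms(1) unfolding ess_bounded_def by blast
  have Vb[measurable]: "V \<in> borel_measurable borel" using Vm by simp
  have L2g: "L2_loc g" and L2g1: "L2_loc g1" and L2g2: "L2_loc g2"
    and wd1: "weak_deriv g g1" and wd2: "weak_deriv g1 g2"
    using assms(5) unfolding W22_loc_with_def by auto
  have gm: "g \<in> borel_measurable lborel" using L2g unfolding L2_loc_def by blast
  have g2m: "g2 \<in> borel_measurable lborel" using L2g2 unfolding L2_loc_def by blast
  have g2sq: "\<And>a b. set_integrable lborel {a..b} (\<lambda>x. (g2 x)\<^sup>2)" using L2g2 unfolding L2_loc_def by blast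
  have g2si: "\<And>a b. set_integrable lborel {a..b} g2" using wd2 unfolding weak_deriv_def by blast
  obtain G where G: "\<And>x. (G has_real_derivative g1 x) (at x)" using global_antideriv[OF cont] by metis
  obtain c where gAE: "AE x in lborel. g x = G x + c" using weak_C1_AE[OF wd1 cont gm G] by blast
  define H where "H x = G x + c" for x
  have H: "\<And>x. (H has_real_derivative g1 x) (at x)"
    unfolding H_def[abs_def] using G by (auto intro!: derivative_eq_intros)
  have Hc: "continuous_on UNIV H" by (meson H DERIV_continuous continuous_at_imp_continuous_on)
  have Hb[measurable]: "H \<in> borel_measurable borel" by (rule borel_measurable_continuous_onI[OF Hc])
  have ftc: "\<And>a b. a < b \<Longrightarrow> g1 b - g1 a = (\<integral>x. indicator {a<..b} x * g2 x \<partial>lborel)"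
    by (rule weak_cont_ftc[OF wd2 cont g2m])
  have VK: "integrable lborel (\<lambda>y. V y * K y)" if Kc: "continuous_on UNIV K" for K
  proof -
    obtain M where M: "M > 0" "\<And>x. x \<in> {-b..b} \<Longrightarrow> \<bar>K x\<bar> \<le> M" using cont_bounded_Icc[OF Kc] by metis
    show ?thesis
    proof (rule Bochner_Integration.integrable_bound[where f="\<lambda>y. indicator {-b..b} y * (C * M)"])
      show "integrable lborel (\<lambda>y. indicator {-b..b} y * (C * M))"
        by (intro integrable_mult_left integrable_real_indicator) (use bpos in auto)
      show "(\<lambda>y. V y * K y) \<in> borel_measurable lborel"
        using Vm borel_measurable_continuous_onI[OF Kc] by simp
      show "AE x in lborel. norm (V x * K x) \<le> norm (indicator {-b..b} x * (C * M))"
        using VC Vz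
      proof eventually_elim
        case (elim x)
        show ?case
        proof (cases "x \<in> {-b<..<b}")
          case True
          have "\<bar>V x\<bar> * \<bar>K x\<bar> \<le> C * M"
            using elim(1) M(2)[of x] True by (intro mult_mono) auto
          moreover have "C * M \<ge> 0" using elim(1) M(1) by (smt (verit) mult_nonneg_nonneg)
          moreover have "\<bar>C\<bar> * \<bar>M\<bar> = C * M" using \<open>C * M \<ge> 0\<close> by (metis abs_mult abs_of_nonneg)
          ultimately show ?thesis using True by (simp add: abs_mult)
        next
          case False then show ?thesis using elim(2) by simp
        qed
      qed
    qed
  qed
  have absV: "integrable lborel (\<lambda>y. \<bar>V y\<bar>)"
    using VK[of "\<lambda>_. 1"] by (simp add: integrable_abs)
  define NV where "NV = (\<integral>y. \<bar>V y\<bar> \<partial>lborel)"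
  have NV0: "NV \<ge> 0" unfolding NV_def by (intro integral_nonneg_AE) auto
  define E where "E \<alpha> y = \<alpha> * H (y / \<alpha>) - \<alpha> * H 0 - y * g1 0" for \<alpha> y
  define A1 where "A1 \<delta> = (\<integral>x. indicator {-\<delta>..\<delta>} x * \<bar>g2 x\<bar> \<partial>lborel)" for \<delta>
  define A2 where "A2 \<delta> = (\<integral>x. indicator {-\<delta>..\<delta>} x * (g2 x)\<^sup>2 \<partial>lborel)" for \<delta>
  define diff where "diff \<alpha> = \<alpha> * (\<integral>x. (\<alpha> * V (\<alpha> * x)) * g x \<partial>lborel) - g1 0 * (\<integral>x. x * V x \<partial>lborel)" for \<alpha>
  have A1nn: "A1 \<delta> \<ge> 0" for \<delta> unfolding A1_def by (intro integral_nonneg_AE) auto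
  have eq1: "(\<integral>x. (\<alpha> * V (\<alpha> * x)) * g x \<partial>lborel) = (\<integral>y. V y * H (y / \<alpha>) \<partial>lborel)" if a: "\<alpha> > 0" for \<alpha>
  proof -
    have "(\<integral>x. (\<alpha> * V (\<alpha> * x)) * g x \<partial>lborel) = (\<integral>x. (\<alpha> * V (\<alpha> * x)) * H x \<partial>lborel)"
    proof (rule integral_cong_AE)
      show "(\<lambda>x. \<alpha> * V (\<alpha> * x) * g x) \<in> borel_measurable lborel" using gm by measurable
      show "(\<lambda>x. \<alpha> * V (\<alpha> * x) * H x) \<in> borel_measurable lborel" by measurable
      show "AE x in lborel. \<alpha> * V (\<alpha> * x) * g x = \<alpha> * V (\<alpha> * x) * H x"
        using gAE by eventually_elim (simp add: H_def)
    qed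
    also have "\<dots> = \<bar>1 / \<alpha>\<bar> *\<^sub>R (\<integral>y. (\<alpha> * V (\<alpha> * (0 + 1 / \<alpha> * y))) * H (0 + 1 / \<alpha> * y) \<partial>lborel)"
      by (rule lborel_integral_real_affine) (use a in simp)
    also have "(\<lambda>y. (\<alpha> * V (\<alpha> * (0 + 1 / \<alpha> * y))) * H (0 + 1 / \<alpha> * y)) = (\<lambda>y. \<alpha> * (V y * H (y / \<alpha>)))"
      using a by (simp add: fun_eq_iff)
    also have "\<bar>1 / \<alpha>\<bar> *\<^sub>R (\<integral>y. \<alpha> * (V y * H (y / \<alpha>)) \<partial>lborel) = (\<integral>y. V y * H (y / \<alpha>) \<partial>lborel)"
      using a by simp
    finally show ?thesis .
  qed
  have eq2: "diff \<alpha> = (\<integral>y. V y * E \<alpha> y \<partial>lborel)" if a: "\<alpha> > 0" for \<alpha>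
  proof -
    have c1: "continuous_on UNIV (\<lambda>y. \<alpha> * H (y / \<alpha>))"
      by (intro continuous_intros continuous_on_compose2[OF Hc]) (use a in auto)
    have i1: "integrable lborel (\<lambda>y. V y * (\<alpha> * H (y / \<alpha>)))" by (rule VK[OF c1])
    have i2: "integrable lborel (\<lambda>y. V y * (y * g1 0))" by (rule VK) (intro continuous_intros)
    have i3: "integrable lborel (\<lambda>y. V y * (\<alpha> * H 0))" by (rule VK) (intro continuous_intros)
    have "(\<integral>y. V y * E \<alpha> y \<partial>lborel) = (\<integral>y. V y * (\<alpha> * H (y / \<alpha>)) - V y * (y * g1 0) - V y * (\<alpha> * H 0) \<partial>lborel)"
      by (simp add: E_def algebra_simps)
    also have "\<dots> = (\<integral>y. V y * (\<alpha> * H (y / \<alpha>)) \<partial>lborel) - (\<integral>y. V y * (y * g1 0) \<partial>lborel) - (\<integral>y. V y * (\<alpha> * H 0) \<partial>lborel)"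
      using i1 i2 i3 by simp
    also have "(\<integral>y. V y * (\<alpha> * H (y / \<alpha>)) \<partial>lborel) = \<alpha> * (\<integral>y. V y * H (y / \<alpha>) \<partial>lborel)"
      by (simp add: algebra_simps)
    also have "(\<integral>y. V y * (y * g1 0) \<partial>lborel) = g1 0 * (\<integral>x. x * V x \<partial>lborel)"
    proof -
      have "(\<lambda>y. V y * (y * g1 0)) = (\<lambda>y. g1 0 * (y * V y))" by (simp add: fun_eq_iff algebra_simps)
      then show ?thesis by (simp only: integral_mult_right_zero)
    qed
    also have "(\<integral>y. V y * (\<alpha> * H 0) \<partial>lborel) = 0"
      using V0 by simp
    finally show ?thesis unfolding diff_def eq1[OF a] by simp
  qed
  have Ebound: "\<bar>E \<alpha> y\<bar> \<le> b * A1 (b / \<alpha>)" if a: "\<alpha> \<ge> 1" and y: "\<bar>y\<bar> < b" for \<alpha> y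
  proof -
    obtain \<xi> where xi: "\<bar>\<xi>\<bar> \<le> \<bar>y / \<alpha>\<bar>" "H (y / \<alpha>) - H 0 = (y / \<alpha>) * g1 \<xi>"
      using mvt_bound[OF H, of "y / \<alpha>"] by blast
    have "\<bar>y / \<alpha>\<bar> \<le> b / \<alpha>" using a y by (simp add: abs_div divide_right_mono)
    then have "\<bar>g1 \<xi> - g1 0\<bar> \<le> A1 (b / \<alpha>)"
      unfolding A1_def using xi(1) by (intro ftc_bound[OF ftc g2si]) auto
    have "E \<alpha> y = \<alpha> * (H (y / \<alpha>) - H 0) - y * g1 0" by (simp add: E_def algebra_simps)
    also have "\<dots> = \<alpha> * ((y / \<alpha>) * g1 \<xi>) - y * g1 0" by (simp only: xi(2))
    also have "\<dots> = y * (g1 \<xi> - g1 0)" using a by (simp add: field_simps)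
    finally have "\<bar>E \<alpha> y\<bar> = \<bar>y\<bar> * \<bar>g1 \<xi> - g1 0\<bar>" by (simp add: abs_mult)
    also have "\<dots> \<le> b * A1 (b / \<alpha>)"
      using y \<open>\<bar>g1 \<xi> - g1 0\<bar> \<le> A1 (b / \<alpha>)\<close> by (intro mult_mono) auto
    finally show ?thesis .
  qed
  have diffbound: "\<bar>diff \<alpha>\<bar> \<le> NV * b * A1 (b / \<alpha>)" if a: "\<alpha> \<ge> 1" for \<alpha>
  proof -
    have a0: "\<alpha> > 0" using a by simp
    have cE: "continuous_on UNIV (E \<alpha>)"
      unfolding E_def[abs_def] by (intro continuous_intros continuous_on_compose2[OF Hc]) (use a0 in auto)
    have iVE: "integrable lborel (\<lambda>y. V y * E \<alpha> y)" by (rule VK[OF cE])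
    have "\<bar>diff \<alpha>\<bar> = \<bar>\<integral>y. V y * E \<alpha> y \<partial>lborel\<bar>" using eq2[OF a0] by simp
    also have "\<dots> \<le> (\<integral>y. \<bar>V y * E \<alpha> y\<bar> \<partial>lborel)" by (rule integral_abs_bound)
    also have "\<dots> \<le> (\<integral>y. \<bar>V y\<bar> * (b * A1 (b / \<alpha>)) \<partial>lborel)"
    proof (rule integral_mono_AE)
      show "integrable lborel (\<lambda>y. \<bar>V y * E \<alpha> y\<bar>)" using iVE by simp
      show "integrable lborel (\<lambda>y. \<bar>V y\<bar> * (b * A1 (b / \<alpha>)))" using absV by simp
      show "AE y in lborel. \<bar>V y * E \<alpha> y\<bar> \<le> \<bar>V y\<bar> * (b * A1 (b / \<alpha>))"
        using Vz
      proof eventually_elim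
        case (elim y)
        show ?case
        proof (cases "y \<in> {-b<..<b}")
          case True
          then have "\<bar>y\<bar> < b" by auto
          then show ?thesis using Ebound[OF a] by (simp add: abs_mult mult_left_mono)
        next
          case False then show ?thesis using elim by simp
        qed
      qed
    qed
    also have "\<dots> = NV * b * A1 (b / \<alpha>)" by (simp add: NV_def)
    finally show ?thesis .
  qed
  have fun_eq: "(\<lambda>\<alpha>. \<alpha> * (\<integral>x. (\<alpha> * V (\<alpha> * x)) * g x \<partial>lborel) - g1 0 * (\<integral>x. x * V x \<partial>lborel)) = diff"
    by (simp add: diff_def fun_eq_iff)
  have "diff \<in> o[at_top](\<lambda>\<alpha>. \<alpha> powr (-1/2))"
  proof (rule landau_o.smallI)
    fix \<epsilon> :: real assume e: "\<epsilon> > 0"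
    define P where "P = NV * b"
    define Q where "Q = NV * b * b"
    have P0: "P \<ge> 0" "Q \<ge> 0" using NV0 bpos by (simp_all add: P_def Q_def)
    define \<tau> where "\<tau> = \<epsilon> / (2 * (Q + 1))"
    define \<eta> where "\<eta> = \<epsilon> * \<tau> / (P + 1)"
    have tau0: "\<tau> > 0" using e P0 by (simp add: \<tau>_def)
    have eta0: "\<eta> > 0" using e tau0 P0 by (simp add: \<eta>_def)
    obtain \<delta>0 where d0: "\<delta>0 > 0" "\<And>\<delta>. 0 \<le> \<delta> \<and> \<delta> \<le> \<delta>0 \<Longrightarrow> A2 \<delta> \<le> \<eta>"
      using A2_small[OF g2m g2sq eta0] unfolding A2_def by blast
    have "eventually (\<lambda>\<alpha>. \<alpha> \<ge> max 1 (b / \<delta>0)) at_top" by (rule eventually_ge_at_top)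
    then show "eventually (\<lambda>\<alpha>. norm (diff \<alpha>) \<le> \<epsilon> * norm (\<alpha> powr (-1/2))) at_top"
    proof eventually_elim
      case (elim \<alpha>)
      have a1: "\<alpha> \<ge> 1" using elim by simp
      have a0: "\<alpha> > 0" using a1 by simp
      define s where "s = sqrt \<alpha>"
      have s0: "s > 0" using a0 by (simp add: s_def)
      have ss: "s * s = \<alpha>" using a0 by (simp add: s_def)
      define \<delta> where "\<delta> = b / \<alpha>"
      have dpos: "\<delta> \<ge> 0" using bpos a0 by (simp add: \<delta>_def)
      have dle: "\<delta> \<le> \<delta>0"
      proof -
        have "b / \<delta>0 \<le> \<alpha>" using elim by simp
        then have "b \<le> \<alpha> * \<delta>0" using d0(1) by (simp add: field_simps)
        then show ?thesis using a0 by (simp add: \<delta>_def field_simps)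
      qed
      have A2d: "A2 \<delta> \<le> \<eta>" using d0(2) dpos dle by blast
      have ts0: "\<tau> * s > 0" using tau0 s0 by simp
      have am: "A1 \<delta> \<le> A2 \<delta> / (2 * (\<tau> * s)) + (\<tau> * s) * \<delta>"
        unfolding A1_def A2_def by (rule amgm_bound[OF g2si g2sq ts0 dpos])
      have h1: "P * (A2 \<delta> / (2 * (\<tau> * s))) \<le> \<epsilon> / (2 * s)"
        by (rule h1_arith[OF P0(1) A2d e tau0 s0 \<eta>_def])
      have h2: "P * ((\<tau> * s) * \<delta>) \<le> \<epsilon> / (2 * s)"
      proof -
        have dd: "\<delta> = b / (s * s)" using ss by (simp add: \<delta>_def)
        have e1: "P * ((\<tau> * s) * \<delta>) = (Q * \<tau>) / s"
          using s0 unfolding dd P_def Q_def by (simp add: field_simps)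
        have q1: "Q + 1 > 0" using P0 by simp
        have e2: "Q * \<tau> = \<epsilon> / 2 * (Q / (Q + 1))" using q1 unfolding \<tau>_def by (simp add: field_simps)
        have e3: "Q / (Q + 1) \<le> 1" using q1 by simp
        have "\<epsilon> / 2 * (Q / (Q + 1)) \<le> \<epsilon> / 2 * 1" by (rule mult_left_mono[OF e3]) (use e in simp)
        then have "Q * \<tau> \<le> \<epsilon> / 2" using e2 by linarith
        then have "(Q * \<tau>) / s \<le> (\<epsilon> / 2) / s" using s0 by (intro divide_right_mono) auto
        then show ?thesis unfolding e1 by simp
      qed
      have "norm (diff \<alpha>) \<le> NV * b * A1 (b / \<alpha>)" using diffbound[OF a1] by simp
      also have "\<dots> = P * A1 \<delta>" by (simp add: P_def \<delta>_def)
      also have "\<dots> \<le> P * (A2 \<delta> / (2 * (\<tau> * s)) + (\<tau> * s) * \<delta>)" using am P0 by (intro mult_left_mono) auto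
      also have "\<dots> = P * (A2 \<delta> / (2 * (\<tau> * s))) + P * ((\<tau> * s) * \<delta>)" by (rule distrib_left)
      also have "\<dots> \<le> \<epsilon> / (2 * s) + \<epsilon> / (2 * s)" by (rule add_mono[OF h1 h2])
      also have "\<dots> = \<epsilon> / s" by (simp add: field_simps)
      also have "\<epsilon> / s = \<epsilon> * norm (\<alpha> powr (-1/2))"
      proof -
        have m: "(-1/2::real) = - (1/2)" by simp
        have "\<alpha> powr (-1/2) = inverse (\<alpha> powr (1/2))" unfolding m by (rule powr_minus)
        also have "\<alpha> powr (1/2) = s" using a0 unfolding s_def by (intro powr_half_sqrt) simp
        finally have p: "\<alpha> powr (-1/2) = inverse s" .
        have "norm (inverse s) = inverse s" using s0 by simp
        then show ?thesis unfolding p by (simp only: divide_inverse)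
      qed
      finally show ?case .
    qed
  qed
  then show ?thesis unfolding fun_eq .
qed

end
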